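(* Let $\kappa$ be a regular infinite cardinal and $\mu$ a singular cardinal with $\mathrm{cf}(\mu)=\kappa$. For $X,X'\in\{{}^{\kappa}\mu,{}^{\mu}2,{}^{\mu}\kappa,{}^{\mu}\mu\}$, the spaces $(X,\mathrm{bd})$ and $(X',\mathrm{bd})$ are homeomorphic if and only if $w(X,\mathrm{bd})=w(X',\mathrm{bd})$.
   Context: For ordinals $\delta,\rho$, ${}^{\delta}\rho$ is the set of functions $\delta\to\rho$; for a partial function $s\colon\delta\rightharpoonup\rho$, $[s]=\{f\in{}^{\delta}\rho: s\subseteq f\}$. The bounded topology on ${}^{\delta}\rho$ has base $\{[s]: s\in{}^{\alpha}\rho,\ \alpha<\delta\}$; $(X,\mathrm{bd})$ denotes $X$ with this topology. $w$ denotes weight (least size of a base). *)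

theory Defs
  imports "HOL-Analysis.Analysis"
begin

unbundle cardinal_syntax

text \<open>An ordinal delta is represented by a well-order r (delta = order type of r, its
elements are Field r, and alpha < delta corresponds to the proper initial segments
underS r a, a in Field r). The codomain rho is represented by a set R (the bounded
topology only depends on the underlying set of rho).\<close>

definition bd_carrier :: "'d rel \<Rightarrow> 'c set \<Rightarrow> ('d \<Rightarrow> 'c) set" where
  "bd_carrier r R = (Field r \<rightarrow>\<^sub>E R)"

definition bd_basic :: "'d rel \<Rightarrow> 'c set \<Rightarrow> ('d \<Rightarrow> 'c) set set" where
  "bd_basic r R = {{f \<in> bd_carrier r R. \<forall>x \<in> underS r a. f x = s x} | a s.
                     a \<in> Field r \<and> (\<forall>x \<in> underS r a. s x \<in> R)}"

definition bd_space :: "'d rel \<Rightarrow> 'c set \<Rightarrow> ('d \<Rightarrow> 'c) topology" where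
  "bd_space r R = topology (arbitrary union_of (\<lambda>V. V \<in> bd_basic r R))"

definition is_base :: "'a topology \<Rightarrow> 'a set set \<Rightarrow> bool" where
  "is_base T B \<longleftrightarrow> openin T = arbitrary union_of (\<lambda>V. V \<in> B)"

definition weight_le :: "'a topology \<Rightarrow> 'b topology \<Rightarrow> bool" where
  "weight_le T T' \<longleftrightarrow> (\<forall>B'. is_base T' B' \<longrightarrow> (\<exists>B. is_base T B \<and> card_of B \<le>o card_of B'))"

definition same_weight :: "'a topology \<Rightarrow> 'b topology \<Rightarrow> bool" where
  "same_weight T T' \<longleftrightarrow> weight_le T T' \<and> weight_le T' T"

definition homeo_iff_same_weight :: "'a topology \<Rightarrow> 'b topology \<Rightarrow> bool" where
  "homeo_iff_same_weight T T' \<longleftrightarrow> (T homeomorphic_space T' \<longleftrightarrow> same_weight T T')"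

definition cf_eq :: "'a rel \<Rightarrow> 'b rel \<Rightarrow> bool" where
  "cf_eq r k \<longleftrightarrow> (\<exists>K \<subseteq> Field r. cofinal K r \<and> card_of K =o k) \<and>
                 (\<forall>K \<subseteq> Field r. cofinal K r \<longrightarrow> k \<le>o card_of K)"

end

theory Submission
  imports Defs
begin

definition cyl :: "'d rel \<Rightarrow> 'c set \<Rightarrow> ('d set \<times> ('d \<Rightarrow> 'c)) \<Rightarrow> ('d \<Rightarrow> 'c) set" where
  "cyl r R n = {f \<in> bd_carrier r R. \<forall>x\<in>fst n. f x = snd n x}"

definition nodes :: "'d rel \<Rightarrow> 'c set \<Rightarrow> ('d set \<times> ('d \<Rightarrow> 'c)) set" where
  "nodes r R = {(D,s). \<exists>a\<in>Field r. D = underS r a \<and> s \<in> D \<rightarrow>\<^sub>E R}"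

lemma basic_eq: "bd_basic r R = cyl r R ` nodes r R"
proof
  show "bd_basic r R \<subseteq> cyl r R ` nodes r R"
  proof
    fix V assume "V \<in> bd_basic r R"
    then obtain a s where V: "V = {f \<in> bd_carrier r R. \<forall>x \<in> underS r a. f x = s x}"
      and a: "a \<in> Field r" and s: "\<forall>x \<in> underS r a. s x \<in> R"
      unfolding bd_basic_def by blast
    have "(underS r a, restrict s (underS r a)) \<in> nodes r R" using a s unfolding nodes_def by auto
    moreover have "V = cyl r R (underS r a, restrict s (underS r a))" unfolding V cyl_def by auto
    ultimately show "V \<in> cyl r R ` nodes r R" by blast
  qed
next
  show "cyl r R ` nodes r R \<subseteq> bd_basic r R"
  proof
    fix V assume "V \<in> cyl r R ` nodes r R"
    then obtain a s where a: "a \<in> Field r" and s: "s \<in> underS r a \<rightarrow>\<^sub>E R"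
      and V: "V = cyl r R (underS r a, s)"
      unfolding nodes_def by blast
    have 1: "V = {f \<in> bd_carrier r R. \<forall>x\<in>underS r a. f x = s x}" unfolding V cyl_def by simp
    have 2: "\<forall>x\<in>underS r a. s x \<in> R" using s by auto
    show "V \<in> bd_basic r R" unfolding bd_basic_def using 1 2 a by blast
  qed
qed

lemma homeo_weight_le:
  assumes "X homeomorphic_space Y" shows "weight_le X Y"
  unfolding weight_le_def
proof (intro allI impI)
  fix B' assume B': "is_base Y B'"
  from assms obtain f g where fg: "homeomorphic_maps X Y f g" unfolding homeomorphic_space_def by blast
  have hf: "homeomorphic_map X Y f" and hg: "homeomorphic_map Y X g"
    and gf: "\<And>x. x \<in> topspace X \<Longrightarrow> g(f x) = x"
    using fg unfolding homeomorphic_maps_map by auto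
  have of: "\<And>U. openin X U \<Longrightarrow> openin Y (f ` U)"
    using homeomorphic_imp_open_map[OF hf] unfolding open_map_def by blast
  have og: "\<And>U. openin Y U \<Longrightarrow> openin X (g ` U)"
    using homeomorphic_imp_open_map[OF hg] unfolding open_map_def by blast
  have B'p: "(\<forall>V. V \<in> B' \<longrightarrow> openin Y V) \<and> (\<forall>U x. openin Y U \<and> x \<in> U \<longrightarrow> (\<exists>V. V \<in> B' \<and> x \<in> V \<and> V \<subseteq> U))"
    using B' unfolding is_base_def openin_topology_base_unique by simp
  have B1: "\<And>V. V \<in> B' \<Longrightarrow> openin Y V" using B'p by simp
  have B2: "\<And>U x. openin Y U \<Longrightarrow> x \<in> U \<Longrightarrow> \<exists>V. V \<in> B' \<and> x \<in> V \<and> V \<subseteq> U"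
    using B'p by simp
  let ?B = "(\<lambda>V. g ` V) ` B'"
  have "is_base X ?B"
    unfolding is_base_def openin_topology_base_unique
  proof (intro conjI allI impI)
    fix V assume "V \<in> ?B"
    then obtain V' where V': "V' \<in> B'" "V = g ` V'" by (rule imageE)
    show "openin X V" unfolding V'(2) by (rule og[OF B1[OF V'(1)]])
  next
    fix U x assume Ux: "openin X U \<and> x \<in> U"
    have "openin Y (f ` U)" using of Ux by simp
    moreover have "f x \<in> f ` U" using Ux by simp
    ultimately obtain V' where V': "V' \<in> B'" "f x \<in> V'" "V' \<subseteq> f ` U" using B2 by meson
    have xt: "x \<in> topspace X" using Ux openin_subset by (metis subsetD)
    have "g ` V' \<subseteq> U"
    proof
      fix y assume "y \<in> g ` V'"
      then obtain zz where zz: "zz \<in> V'" "y = g zz" by (rule imageE)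
      then obtain u where u: "u \<in> U" "zz = f u" using V'(3) by (meson image_iff subsetD)
      have "u \<in> topspace X" using u(1) Ux openin_subset by (metis subsetD)
      thus "y \<in> U" using gf zz(2) u by simp
    qed
    moreover have "x \<in> g ` V'" using V'(2) gf[OF xt] by (metis image_eqI)
    ultimately show "\<exists>V. V \<in> ?B \<and> x \<in> V \<and> V \<subseteq> U" using V'(1) by blast
  qed
  moreover have "|?B| \<le>o |B'|" by (rule card_of_image)
  ultimately show "\<exists>B. is_base X B \<and> |B| \<le>o |B'|" by blast
qed

lemma homeo_same_weight: "X homeomorphic_space Y \<Longrightarrow> same_weight X Y"
proof -
  assume h: "X homeomorphic_space Y"
  hence h2: "Y homeomorphic_space X" using homeomorphic_space_sym by auto
  show "same_weight X Y" unfolding same_weight_def using homeo_weight_le[OF h] homeo_weight_le[OF h2] by simp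
qed

locale bdsp =
  fixes r :: "'d rel" and R :: "'c set"
  assumes CO: "Card_order r" and INF: "infinite (Field r)"
    and TWO: "\<exists>r0 r1. r0 \<in> R \<and> r1 \<in> R \<and> r0 \<noteq> r1"
begin

lemma WO: "Well_order r" using CO card_order_on_well_order_on by blast
lemma wo: "wo_rel r" using WO wo_rel_def by blast
lemma TR: "trans r" using wo wo_rel.TRANS by blast
lemma AS: "antisym r" using wo wo_rel.ANTISYM by blast
lemma RF: "Refl r" using wo wo_rel.REFL by blast

definition r0 where "r0 = (SOME x. x \<in> R)"
lemma r0: "r0 \<in> R" unfolding r0_def using TWO by (meson someI)

definition ext :: "('d set \<times> ('d \<Rightarrow> 'c)) \<Rightarrow> ('d \<Rightarrow> 'c)" where
  "ext n = (\<lambda>x. if x \<in> fst n then snd n x else if x \<in> Field r then r0 else undefined)"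

lemma nodesD: "n \<in> nodes r R \<Longrightarrow> \<exists>a\<in>Field r. fst n = underS r a \<and> snd n \<in> fst n \<rightarrow>\<^sub>E R"
  unfolding nodes_def by auto

lemma underS_sub: "underS r a \<subseteq> Field r"
  by (auto simp: underS_def intro: FieldI1)

lemma ext_in: assumes "n \<in> nodes r R" shows "ext n \<in> cyl r R n"
proof -
  obtain a where a: "a \<in> Field r" "fst n = underS r a" "snd n \<in> fst n \<rightarrow>\<^sub>E R" using nodesD[OF assms] by blast
  have "fst n \<subseteq> Field r" using a(2) underS_sub by simp
  hence e1: "ext n \<in> extensional (Field r)" unfolding ext_def extensional_def by auto
  have e2: "\<forall>x\<in>Field r. ext n x \<in> R" using a(3) r0 unfolding ext_def by (auto simp: PiE_iff)
  have e3: "\<forall>x\<in>fst n. ext n x = snd n x" unfolding ext_def by simp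
  show ?thesis using e1 e2 e3 unfolding cyl_def bd_carrier_def by (auto simp: PiE_iff)
qed

lemma cyl_ne: "n \<in> nodes r R \<Longrightarrow> cyl r R n \<noteq> {}"
  using ext_in by blast

lemma dom_linear: assumes "n1 \<in> nodes r R" "n2 \<in> nodes r R"
  shows "fst n1 \<subseteq> fst n2 \<or> fst n2 \<subseteq> fst n1"
proof -
  obtain a1 where "a1 \<in> Field r" "fst n1 = underS r a1" using nodesD[OF assms(1)] by blast
  moreover obtain a2 where "a2 \<in> Field r" "fst n2 = underS r a2" using nodesD[OF assms(2)] by blast
  ultimately show ?thesis using wo_rel.ofilter_linord[OF wo] wo_rel.underS_ofilter[OF wo] by metis
qed

lemma cyl_sub_iff: assumes "n1 \<in> nodes r R" "n2 \<in> nodes r R" "fst n1 \<subseteq> fst n2"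
  "\<forall>x\<in>fst n1. snd n1 x = snd n2 x"
  shows "cyl r R n2 \<subseteq> cyl r R n1"
  using assms unfolding cyl_def by auto

lemma cyl_cases: assumes "n1 \<in> nodes r R" "n2 \<in> nodes r R"
  shows "cyl r R n1 \<inter> cyl r R n2 = {} \<or> cyl r R n1 \<subseteq> cyl r R n2 \<or> cyl r R n2 \<subseteq> cyl r R n1"
proof -
  { fix m1 m2 assume m: "m1 \<in> nodes r R" "m2 \<in> nodes r R" "fst m1 \<subseteq> fst m2"
    have "cyl r R m1 \<inter> cyl r R m2 = {} \<or> cyl r R m2 \<subseteq> cyl r R m1"
    proof (cases "\<forall>x\<in>fst m1. snd m1 x = snd m2 x")
      case True thus ?thesis using cyl_sub_iff m by blast
    next
      case False
      then obtain x where x: "x \<in> fst m1" "snd m1 x \<noteq> snd m2 x" by blast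
      { fix f assume "f \<in> cyl r R m1" "f \<in> cyl r R m2"
        moreover have "x \<in> fst m2" using x(1) m(3) by blast
        ultimately have False using x unfolding cyl_def by auto }
      thus ?thesis by blast
    qed }
  thus ?thesis using dom_linear[OF assms] assms by blast
qed

lemma cyl_disj_same: assumes "n1 \<in> nodes r R" "n2 \<in> nodes r R" "fst n1 = fst n2" "n1 \<noteq> n2"
  shows "cyl r R n1 \<inter> cyl r R n2 = {}"
proof -
  have "snd n1 \<noteq> snd n2" using assms(3,4) by (simp add: prod_eq_iff)
  moreover have "snd n1 \<in> fst n1 \<rightarrow>\<^sub>E R" "snd n2 \<in> fst n1 \<rightarrow>\<^sub>E R" using nodesD assms by metis+
  ultimately obtain x where "x \<in> fst n1" "snd n1 x \<noteq> snd n2 x"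
    by (metis PiE_ext)
  thus ?thesis using assms(3) unfolding cyl_def by auto
qed

lemma istop: "istopology (arbitrary union_of (\<lambda>V. V \<in> bd_basic r R))"
  unfolding istopology_base_eq basic_eq
proof (intro allI impI)
  fix S T assume "S \<in> cyl r R ` nodes r R \<and> T \<in> cyl r R ` nodes r R"
  then obtain n1 n2 where n: "n1 \<in> nodes r R" "n2 \<in> nodes r R" "S = cyl r R n1" "T = cyl r R n2" by blast
  show "(arbitrary union_of (\<lambda>V. V \<in> cyl r R ` nodes r R)) (S \<inter> T)"
  proof -
    have c: "cyl r R n1 \<in> cyl r R ` nodes r R" "cyl r R n2 \<in> cyl r R ` nodes r R" using n by auto
    consider "S \<inter> T = {}" | "S \<inter> T = S" | "S \<inter> T = T" using cyl_cases[OF n(1,2)] n(3,4) by blast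
    thus ?thesis
    proof cases
      case 1 thus ?thesis by simp
    next
      case 2 thus ?thesis using c n(3) by (simp add: arbitrary_def union_of_inc)
    next
      case 3 thus ?thesis using c n(4) by (simp add: arbitrary_def union_of_inc)
    qed
  qed
qed

lemma openX: "openin (bd_space r R) = arbitrary union_of (\<lambda>V. V \<in> bd_basic r R)"
  unfolding bd_space_def using istop by simp

lemma base_props: "(\<forall>V. V \<in> bd_basic r R \<longrightarrow> openin (bd_space r R) V) \<and>
   (\<forall>U x. openin (bd_space r R) U \<and> x \<in> U \<longrightarrow> (\<exists>V. V \<in> bd_basic r R \<and> x \<in> V \<and> V \<subseteq> U))"
  using openX unfolding openin_topology_base_unique by blast

lemma open_cyl: "n \<in> nodes r R \<Longrightarrow> openin (bd_space r R) (cyl r R n)"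
  using base_props basic_eq by blast

lemma open_nbhd: "openin (bd_space r R) U \<Longrightarrow> f \<in> U \<Longrightarrow> \<exists>n\<in>nodes r R. f \<in> cyl r R n \<and> cyl r R n \<subseteq> U"
proof -
  assume "openin (bd_space r R) U" "f \<in> U"
  then obtain V where V: "V \<in> bd_basic r R" "f \<in> V" "V \<subseteq> U" using base_props by blast
  then obtain n where "n \<in> nodes r R" "V = cyl r R n" unfolding basic_eq by blast
  thus ?thesis using V by blast
qed

lemma open_sub: "openin (bd_space r R) U \<Longrightarrow> U \<subseteq> bd_carrier r R"
  using open_nbhd unfolding cyl_def by blast

lemma min_underS: "\<exists>a\<in>Field r. underS r a = {}"
proof -
  have ne: "Field r \<noteq> {}" using INF by auto
  let ?a = "wo_rel.minim r (Field r)"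
  have a: "?a \<in> Field r" using wo_rel.minim_inField[OF wo _ ne] by simp
  have "underS r ?a = {}"
  proof (rule ccontr)
    assume "underS r ?a \<noteq> {}"
    then obtain x where x: "x \<in> underS r ?a" by blast
    hence xa: "(x, ?a) \<in> r" "x \<noteq> ?a" unfolding underS_def by auto
    hence "x \<in> Field r" by (auto intro: FieldI1)
    note xa = this xa
    moreover have "(?a, x) \<in> r" using wo_rel.minim_least[OF wo _ \<open>x \<in> Field r\<close>] by simp
    ultimately show False using AS unfolding antisym_def by blast
  qed
  thus ?thesis using a by blast
qed

lemma carrier_node: "\<exists>n\<in>nodes r R. cyl r R n = bd_carrier r R"
proof -
  obtain a where a: "a \<in> Field r" "underS r a = {}" using min_underS by blast
  have "(\<lambda>_. undefined) \<in> underS r a \<rightarrow>\<^sub>E R" unfolding a(2) by simp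
  hence "(underS r a, \<lambda>_. undefined) \<in> nodes r R" using a(1) unfolding nodes_def by blast
  moreover have "cyl r R (underS r a, \<lambda>_. undefined) = bd_carrier r R" unfolding cyl_def a(2) by simp
  ultimately show ?thesis by blast
qed

lemma topspaceX: "topspace (bd_space r R) = bd_carrier r R"
proof
  show "topspace (bd_space r R) \<subseteq> bd_carrier r R"
  proof
    fix x assume "x \<in> topspace (bd_space r R)"
    then obtain U where "openin (bd_space r R) U" "x \<in> U" unfolding topspace_def by blast
    thus "x \<in> bd_carrier r R" using open_sub by blast
  qed
  show "bd_carrier r R \<subseteq> topspace (bd_space r R)"
  proof -
    obtain n where n: "n \<in> nodes r R" "cyl r R n = bd_carrier r R" using carrier_node by blast
    have "openin (bd_space r R) (cyl r R n)" using open_cyl[OF n(1)] .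
    hence "cyl r R n \<subseteq> topspace (bd_space r R)" by (rule openin_subset)
    thus ?thesis using n(2) by simp
  qed
qed

end

context bdsp begin

lemma pow_le_func: "|Pow A| \<le>o |A \<rightarrow>\<^sub>E R|"
proof -
  obtain a b where ab: "a \<in> R" "b \<in> R" "a \<noteq> b" using TWO by blast
  let ?f = "\<lambda>X. (\<lambda>x. if x \<in> A then (if x \<in> X then a else b) else undefined)"
  have "inj_on ?f (Pow A)"
  proof (rule inj_onI)
    fix X Y assume XY: "X \<in> Pow A" "Y \<in> Pow A" "?f X = ?f Y"
    show "X = Y"
    proof (rule set_eqI)
      fix x show "x \<in> X \<longleftrightarrow> x \<in> Y"
      proof (cases "x \<in> A")
        case True
        from fun_cong[OF XY(3), of x] True ab(3) show ?thesis by (auto split: if_splits)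
      next
        case False thus ?thesis using XY by auto
      qed
    qed
  qed
  moreover have "\<And>X. X \<in> Pow A \<Longrightarrow> ?f X \<in> A \<rightarrow>\<^sub>E R" using ab by auto
  ultimately show ?thesis by (rule card_of_ordLeqI)
qed

lemma lt_func: "|A| <o |A \<rightarrow>\<^sub>E R|"
  using card_of_Pow pow_le_func ordLess_ordLeq_trans by blast

lemma small_is_underS: assumes "|Z| <o |Field r|" shows "\<exists>a\<in>Field r. |Z| =o |underS r a|"
proof -
  have "|Z| <o r" using assms card_of_Field_ordIso[OF CO] ordLess_ordIso_trans by blast
  then obtain a where a: "a \<in> Field r" "|Z| =o Restr r (underS r a)"
    using ordLess_iff_ordIso_Restr[OF WO card_of_Well_order] by blast
  have "|Field |Z|| =o |Field (Restr r (underS r a))|" using card_of_cong[OF a(2)] .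
  moreover have "Field (Restr r (underS r a)) = underS r a"
    using Field_Restr_ofilter[OF WO wo_rel.underS_ofilter[OF wo]] .
  ultimately show ?thesis using a(1) by (auto simp: Field_card_of)
qed

lemma underS_lt: "a \<in> Field r \<Longrightarrow> |underS r a| <o |Field r|"
  using card_of_underS[OF CO] card_of_Field_ordIso[OF CO] ordLess_ordIso_trans ordIso_symmetric by blast

lemma nodes_le: assumes H: "\<forall>a\<in>Field r. |underS r a \<rightarrow>\<^sub>E R| \<le>o |Z|" shows "|nodes r R| \<le>o |Z|"
proof -
  have FZ: "|Field r| \<le>o |Z|"
  proof (rule ccontr)
    assume "\<not> |Field r| \<le>o |Z|"
    hence "|Z| <o |Field r|" by (metis not_ordLeq_iff_ordLess card_of_Well_order)
    then obtain a where a: "a \<in> Field r" "|Z| =o |underS r a|" using small_is_underS by blast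
    have "|underS r a| <o |underS r a \<rightarrow>\<^sub>E R|" by (rule lt_func)
    moreover have "|underS r a \<rightarrow>\<^sub>E R| \<le>o |Z|" using H a by blast
    ultimately have "|underS r a| <o |Z|" using ordLess_ordLeq_trans by blast
    hence "|underS r a| <o |underS r a|" using a(2) ordLess_ordIso_trans by blast
    thus False using ordLess_irreflexive by blast
  qed
  have infZ: "infinite Z" using FZ INF card_of_ordLeq_finite by blast
  have eq: "nodes r R = (\<Union>a\<in>Field r. {underS r a} \<times> (underS r a \<rightarrow>\<^sub>E R))"
    unfolding nodes_def by auto
  have "\<forall>a\<in>Field r. |{underS r a} \<times> (underS r a \<rightarrow>\<^sub>E R)| \<le>o |Z|"
  proof
    fix a assume a: "a \<in> Field r"
    have "{underS r a} \<times> (underS r a \<rightarrow>\<^sub>E R) = Pair (underS r a) ` (underS r a \<rightarrow>\<^sub>E R)" by auto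
    hence "|{underS r a} \<times> (underS r a \<rightarrow>\<^sub>E R)| \<le>o |underS r a \<rightarrow>\<^sub>E R|" using card_of_image by metis
    thus "|{underS r a} \<times> (underS r a \<rightarrow>\<^sub>E R)| \<le>o |Z|" using H a ordLeq_transitive by blast
  qed
  thus ?thesis unfolding eq by (rule card_of_UNION_ordLeq_infinite[OF infZ FZ])
qed

lemma base_lower: assumes "is_base (bd_space r R) B" shows "|nodes r R| \<le>o |B|"
proof (rule nodes_le, intro ballI)
  fix a assume a: "a \<in> Field r"
  have bp: "\<forall>U x. openin (bd_space r R) U \<and> x \<in> U \<longrightarrow> (\<exists>V. V \<in> B \<and> x \<in> V \<and> V \<subseteq> U)"
    using assms unfolding is_base_def openin_topology_base_unique by blast
  define ch where "ch s = (SOME V. V \<in> B \<and> ext (underS r a, s) \<in> V \<and> V \<subseteq> cyl r R (underS r a, s))" for s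
  have ch: "ch s \<in> B \<and> ext (underS r a, s) \<in> ch s \<and> ch s \<subseteq> cyl r R (underS r a, s)"
    if s: "s \<in> underS r a \<rightarrow>\<^sub>E R" for s
  proof -
    have n: "(underS r a, s) \<in> nodes r R" using a s unfolding nodes_def by blast
    show ?thesis unfolding ch_def apply (rule someI_ex) using bp open_cyl[OF n] ext_in[OF n] by blast
  qed
  have "inj_on ch (underS r a \<rightarrow>\<^sub>E R)"
  proof (rule inj_onI)
    fix s t assume s: "s \<in> underS r a \<rightarrow>\<^sub>E R" and t: "t \<in> underS r a \<rightarrow>\<^sub>E R" and eq: "ch s = ch t"
    show "s = t"
    proof (rule ccontr)
      assume "s \<noteq> t"
      have ns: "(underS r a, s) \<in> nodes r R" using a s unfolding nodes_def by blast
      have nt: "(underS r a, t) \<in> nodes r R" using a t unfolding nodes_def by blast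
      have "cyl r R (underS r a, s) \<inter> cyl r R (underS r a, t) = {}"
        using cyl_disj_same[OF ns nt] \<open>s \<noteq> t\<close> by simp
      moreover have "ext (underS r a, s) \<in> cyl r R (underS r a, s)" using ext_in[OF ns] .
      moreover have "ext (underS r a, s) \<in> cyl r R (underS r a, t)" using ch[OF s] ch[OF t] eq by blast
      ultimately show False by blast
    qed
  qed
  thus "|underS r a \<rightarrow>\<^sub>E R| \<le>o |B|" by (rule card_of_ordLeqI) (use ch in blast)
qed

lemma basic_le: "|bd_basic r R| \<le>o |nodes r R|" using basic_eq card_of_image by metis

lemma is_base_basic: "is_base (bd_space r R) (bd_basic r R)"
  unfolding is_base_def using openX .

end

lemma weight_le_iff: assumes X: "bdsp r R" and Y: "bdsp r' R'"
  shows "weight_le (bd_space r R) (bd_space r' R') \<longleftrightarrow> |nodes r R| \<le>o |nodes r' R'|"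
proof
  assume "weight_le (bd_space r R) (bd_space r' R')"
  then obtain B where B: "is_base (bd_space r R) B" "|B| \<le>o |bd_basic r' R'|"
    unfolding weight_le_def using bdsp.is_base_basic[OF Y] by blast
  have "|nodes r R| \<le>o |B|" using bdsp.base_lower[OF X B(1)] .
  also have "|B| \<le>o |bd_basic r' R'|" by (rule B(2))
  also have "|bd_basic r' R'| \<le>o |nodes r' R'|" using bdsp.basic_le[OF Y] .
  finally show "|nodes r R| \<le>o |nodes r' R'|" .
next
  assume le: "|nodes r R| \<le>o |nodes r' R'|"
  show "weight_le (bd_space r R) (bd_space r' R')"
    unfolding weight_le_def
  proof (intro allI impI)
    fix B' assume B': "is_base (bd_space r' R') B'"
    have "|bd_basic r R| \<le>o |nodes r R|" using bdsp.basic_le[OF X] .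
    also have "|nodes r R| \<le>o |nodes r' R'|" by (rule le)
    also have "|nodes r' R'| \<le>o |B'|" using bdsp.base_lower[OF Y B'] .
    finally show "\<exists>B. is_base (bd_space r R) B \<and> |B| \<le>o |B'|" using bdsp.is_base_basic[OF X] by blast
  qed
qed

lemma same_weight_iff: assumes X: "bdsp r R" and Y: "bdsp r' R'"
  shows "same_weight (bd_space r R) (bd_space r' R') \<longleftrightarrow> |nodes r R| =o |nodes r' R'|"
  unfolding same_weight_def weight_le_iff[OF X Y] weight_le_iff[OF Y X] ordIso_iff_ordLeq by blast

context bdsp begin

lemma Field_lim: "a \<in> Field r \<Longrightarrow> \<exists>b\<in>Field r. a \<in> underS r b"
  using infinite_Card_order_limit[OF CO INF] unfolding underS_def by blast

lemma TOT: "a \<in> Field r \<Longrightarrow> b \<in> Field r \<Longrightarrow> (a,b) \<in> r \<or> (b,a) \<in> r"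
  using wo_rel.TOTALS[OF wo] by blast

lemma underS_trans1: assumes "(x,y) \<in> r" "y \<in> underS r z" shows "x \<in> underS r z"
proof -
  have yz: "(y,z) \<in> r" "y \<noteq> z" using assms(2) unfolding underS_def by auto
  have "(x,z) \<in> r" using TR assms(1) yz(1) unfolding trans_def by blast
  moreover have "x \<noteq> z"
  proof
    assume "x = z"
    hence "(z,y) \<in> r" using assms(1) by simp
    thus False using yz AS unfolding antisym_def by blast
  qed
  ultimately show ?thesis unfolding underS_def by simp
qed

lemma underS_trans2: assumes "x \<in> underS r y" "y \<in> underS r z" shows "x \<in> underS r z"
  using underS_trans1[OF _ assms(2)] assms(1) unfolding underS_def by simp

lemma underS_mono: "a \<in> underS r b \<Longrightarrow> underS r a \<subseteq> underS r b"
  using underS_trans2 by blast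

lemma in_Field_underS: "x \<in> underS r y \<Longrightarrow> x \<in> Field r"
  using underS_sub by blast

lemma above2: assumes "a \<in> Field r" "b \<in> Field r" shows "\<exists>c\<in>Field r. a \<in> underS r c \<and> b \<in> underS r c"
proof (cases "(a,b) \<in> r")
  case True
  obtain c where c: "c \<in> Field r" "b \<in> underS r c" using Field_lim assms(2) by blast
  thus ?thesis using underS_trans1[OF True c(2)] by blast
next
  case False
  hence ba: "(b,a) \<in> r" using TOT assms by blast
  obtain c where c: "c \<in> Field r" "a \<in> underS r c" using Field_lim assms(1) by blast
  thus ?thesis using underS_trans1[OF ba c(2)] by blast
qed

lemma tail: assumes l: "l \<in> Field r" and x: "x \<in> Field r"
  shows "\<exists>h\<in>Field r. \<exists>\<phi>. inj_on \<phi> (underS r x) \<and> \<phi> ` underS r x \<subseteq> underS r h - underS r l"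
proof -
  let ?A = "Field r - underS r l"
  have FA: "|Field r| \<le>o |?A|"
  proof (rule ccontr)
    assume "\<not> |Field r| \<le>o |?A|"
    hence "|?A| <o |Field r|" by (metis not_ordLeq_iff_ordLess card_of_Well_order)
    moreover have "|underS r l| <o |Field r|" using underS_lt[OF l] .
    ultimately have "|?A \<union> underS r l| <o |Field r|" using card_of_Un_ordLess_infinite[OF INF] by blast
    moreover have "?A \<union> underS r l = Field r" using underS_sub by blast
    ultimately have "|Field r| <o |Field r|" by simp
    thus False using ordLess_irreflexive by blast
  qed
  let ?r' = "Restr r ?A"
  have W': "Well_order ?r'" using Well_order_Restr[OF WO] .
  have F': "Field ?r' = ?A" using Refl_Field_Restr2[OF RF] by blast
  have "r \<le>o ?r'"
  proof -
    have 1: "r =o |Field r|" using card_of_Field_ordIso[OF CO] ordIso_symmetric by blast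
    have "well_order_on ?A ?r'" using W' F' by simp
    hence 2: "|?A| \<le>o ?r'" by (rule card_of_least)
    from 1 FA 2 show ?thesis using ordIso_ordLeq_trans ordLeq_transitive by blast
  qed
  then obtain f where emb: "embed r ?r' f" unfolding ordLeq_def by blast
  have bij: "bij_betw f (underS r x) (underS ?r' (f x))" using embed_underS[OF WO emb x] .
  have fx: "f x \<in> ?A" using embed_Field[OF emb] x F' by blast
  have sub: "underS ?r' (f x) \<subseteq> underS r (f x) - underS r l"
    unfolding underS_def by auto
  have "inj_on f (underS r x)" "f ` underS r x \<subseteq> underS r (f x) - underS r l"
    using bij sub unfolding bij_betw_def by auto
  moreover have "f x \<in> Field r" using fx by blast
  ultimately show ?thesis by blast
qed

lemma tail2: assumes "l \<in> Field r" "x \<in> Field r" "b \<in> Field r"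
  shows "\<exists>h\<in>Field r. b \<in> underS r h \<and> underS r l \<subseteq> underS r h \<and>
     (\<exists>\<phi>. inj_on \<phi> (underS r x) \<and> \<phi> ` underS r x \<subseteq> underS r h - underS r l)"
proof -
  obtain h0 \<phi> where h0: "h0 \<in> Field r" "inj_on \<phi> (underS r x)" "\<phi> ` underS r x \<subseteq> underS r h0 - underS r l"
    using tail assms(1,2) by blast
  obtain c where c: "c \<in> Field r" "h0 \<in> underS r c" "b \<in> underS r c" using above2 h0(1) assms(3) by blast
  obtain h where h: "h \<in> Field r" "c \<in> underS r h" "l \<in> underS r h" using above2 c(1) assms(1) by blast
  have s1: "underS r h0 \<subseteq> underS r h" using underS_mono[OF c(2)] underS_mono[OF h(2)] by blast
  have "b \<in> underS r h" using c(3) underS_mono[OF h(2)] by blast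
  moreover have "underS r l \<subseteq> underS r h" using underS_mono[OF h(3)] .
  moreover have "\<phi> ` underS r x \<subseteq> underS r h - underS r l" using h0(3) s1 by blast
  ultimately show ?thesis using h(1) h0(2) by blast
qed

lemma under_eq: "d \<in> Field r \<Longrightarrow> under r d = insert d (underS r d)"
  using RF unfolding under_def underS_def refl_on_def by auto

lemma under_node: assumes d: "d \<in> Field r" shows "\<exists>e\<in>Field r. under r d = underS r e"
proof -
  have of: "wo_rel.ofilter r (under r d)" using wo_rel.under_ofilter[OF wo] .
  obtain c where c: "c \<in> Field r" "d \<in> underS r c" using Field_lim d by blast
  have "c \<notin> under r d"
  proof
    assume "c \<in> under r d"
    hence "(c,d) \<in> r" unfolding under_def by simp
    moreover have "(d,c) \<in> r" "d \<noteq> c" using c(2) unfolding underS_def by auto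
    ultimately show False using AS unfolding antisym_def by blast
  qed
  hence "under r d \<noteq> Field r" using c(1) by blast
  thus ?thesis using of wo_rel.ofilter_underS_Field[OF wo] by blast
qed

lemma ext_R: "n \<in> nodes r R \<Longrightarrow> y \<in> Field r \<Longrightarrow> ext n y \<in> R"
  unfolding ext_def using r0 nodesD by (auto simp: PiE_iff)

lemma ext_eq: "y \<in> fst n \<Longrightarrow> ext n y = snd n y"
  unfolding ext_def by simp

lemma carrier_R: "f \<in> bd_carrier r R \<Longrightarrow> y \<in> Field r \<Longrightarrow> f y \<in> R"
  unfolding bd_carrier_def by auto

lemma restrict_node: "a \<in> Field r \<Longrightarrow> f \<in> bd_carrier r R \<Longrightarrow> (underS r a, restrict f (underS r a)) \<in> nodes r R"
  unfolding nodes_def using carrier_R underS_sub by fastforce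

lemma cyl_le: assumes "n1 \<in> nodes r R" "n2 \<in> nodes r R" "fst n1 \<subseteq> fst n2"
  "\<forall>x\<in>fst n1. snd n2 x = snd n1 x" shows "cyl r R n2 \<subseteq> cyl r R n1"
  using assms unfolding cyl_def by auto

end

definition partprop :: "'d rel \<Rightarrow> 'c set \<Rightarrow> ('d set \<times> ('d \<Rightarrow> 'c)) \<Rightarrow> 'd \<Rightarrow> ('d set \<times> ('d \<Rightarrow> 'c)) set \<Rightarrow> bool" where
  "partprop r R n b P \<longleftrightarrow> P \<subseteq> nodes r R \<and>
     (\<forall>p\<in>P. b \<in> fst p \<and> fst n \<subseteq> fst p \<and> (\<forall>y\<in>fst n. snd p y = snd n y)) \<and>
     (\<forall>p\<in>P. \<forall>q\<in>P. p \<noteq> q \<longrightarrow> cyl r R p \<inter> cyl r R q = {}) \<and>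
     cyl r R n \<subseteq> \<Union>(cyl r R ` P) \<and> |P| =o |nodes r R|"

locale bdsp2 = bdsp r R for r :: "'d rel" and R :: "'c set" +
  fixes kappa :: "'k rel"
  assumes COk: "Card_order kappa" and INFk: "infinite (Field kappa)" and CF: "cf_eq r kappa"
    and SPLIT: "( |Field kappa| \<le>o |R| \<and> infinite R) \<or> (\<exists>x\<in>Field r. |Field kappa| \<le>o |underS r x| )"
begin

lemma K_ex: "\<exists>K. K \<subseteq> Field r \<and> cofinal K r \<and> |K| \<le>o |Field kappa|"
proof -
  obtain K where K: "K \<subseteq> Field r" "cofinal K r" "|K| =o kappa" using CF unfolding cf_eq_def by blast
  have "kappa =o |Field kappa|" using card_of_Field_ordIso[OF COk] ordIso_symmetric by blast
  hence "|K| =o |Field kappa|" by (rule ordIso_transitive[OF K(3)])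
  hence "|K| \<le>o |Field kappa|" by (metis ordIso_iff_ordLeq)
  thus ?thesis using K(1,2) by blast
qed

lemma partition: assumes n: "n \<in> nodes r R" and b: "b \<in> Field r" shows "\<exists>P. partprop r R n b P"
proof -
  obtain a0 where a0: "a0 \<in> Field r" "fst n = underS r a0" and sn: "snd n \<in> fst n \<rightarrow>\<^sub>E R"
    using nodesD[OF n] by blast
  define z where "z = ext n"
  have zR: "\<And>y. y \<in> Field r \<Longrightarrow> z y \<in> R" unfolding z_def using ext_R[OF n] .
  have zn: "\<And>y. y \<in> fst n \<Longrightarrow> z y = snd n y" unfolding z_def using ext_eq .
  obtain K where K: "K \<subseteq> Field r" "cofinal K r" "|K| \<le>o |Field kappa|" using K_ex by blast
  define S where "S h = {(d,v). d \<in> underS r h - fst n \<and> v \<in> R \<and> v \<noteq> z d}" for h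
  have a0n: "a0 \<notin> fst n" unfolding a0(2) underS_def by simp
  obtain h1 where h1: "h1 \<in> Field r" "a0 \<in> underS r h1" "fst n \<subseteq> underS r h1" "|K| \<le>o |S h1|"
  proof -
    consider (i) "|Field kappa| \<le>o |R|" "infinite R" | (ii) x where "x \<in> Field r" "|Field kappa| \<le>o |underS r x|"
      using SPLIT by blast
    thus ?thesis
    proof cases
      case i
      obtain h where h: "h \<in> Field r" "a0 \<in> underS r h" using Field_lim a0(1) by blast
      have sub: "fst n \<subseteq> underS r h" using a0(2) underS_mono[OF h(2)] by simp
      obtain g where g: "bij_betw g R (R - {z a0})" using infinite_imp_bij_betw[OF i(2)] by blast
      have "inj_on (\<lambda>v. (a0, g v)) R" using g unfolding bij_betw_def inj_on_def by blast
      moreover have "\<And>v. v \<in> R \<Longrightarrow> (a0, g v) \<in> S h"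
        using g h(2) a0n unfolding S_def bij_betw_def by auto
      ultimately have "|R| \<le>o |S h|" by (rule card_of_ordLeqI)
      hence "|K| \<le>o |S h|" by (rule ordLeq_transitive[OF ordLeq_transitive[OF K(3) i(1)]])
      thus ?thesis using that h sub by blast
    next
      case ii
      obtain h \<phi> where h: "h \<in> Field r" "a0 \<in> underS r h" "underS r a0 \<subseteq> underS r h"
        "inj_on \<phi> (underS r x)" "\<phi> ` underS r x \<subseteq> underS r h - underS r a0"
        using tail2[OF a0(1) ii(1) a0(1)] by blast
      define vf where "vf d = (SOME v. v \<in> R \<and> v \<noteq> z d)" for d
      have vf: "vf d \<in> R \<and> vf d \<noteq> z d" for d
      proof -
        obtain u1 u2 where "u1 \<in> R" "u2 \<in> R" "u1 \<noteq> u2" using TWO by blast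
        hence "\<exists>v. v \<in> R \<and> v \<noteq> z d" by metis
        thus ?thesis unfolding vf_def by (rule someI_ex)
      qed
      have "inj_on (\<lambda>y. (\<phi> y, vf (\<phi> y))) (underS r x)" using h(4) unfolding inj_on_def by blast
      moreover have "\<And>y. y \<in> underS r x \<Longrightarrow> (\<phi> y, vf (\<phi> y)) \<in> S h"
        using h(5) vf a0(2) unfolding S_def by auto
      ultimately have "|underS r x| \<le>o |S h|" by (rule card_of_ordLeqI)
      hence "|K| \<le>o |S h|" by (rule ordLeq_transitive[OF ordLeq_transitive[OF K(3) ii(2)]])
      thus ?thesis using that h a0(2) by auto
    qed
  qed
  define J where "J = Some ` S h1 \<union> {None}"
  have KJ: "|K| \<le>o |J|"
  proof -
    have "inj_on Some (S h1)" by simp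
    moreover have "\<And>x. x \<in> S h1 \<Longrightarrow> Some x \<in> J" unfolding J_def by blast
    ultimately have "|S h1| \<le>o |J|" by (rule card_of_ordLeqI)
    thus ?thesis by (rule ordLeq_transitive[OF h1(4)])
  qed
  have Kne: "K \<noteq> {}"
  proof -
    obtain a where "a \<in> Field r" using a0(1) by blast
    thus ?thesis using K(2) unfolding cofinal_def by blast
  qed
  obtain \<sigma> where \<sigma>: "\<sigma> ` J = K" using card_of_ordLeq2[OF Kne] KJ by metis
  define Q where "Q j = (case j of None \<Rightarrow> (underS r h1, restrict z (underS r h1))
      | Some dv \<Rightarrow> (under r (fst dv), \<lambda>y. if y \<in> under r (fst dv) then (if y = fst dv then snd dv else z y) else undefined))" for j
  have QNone: "Q None = (underS r h1, restrict z (underS r h1))" unfolding Q_def by simp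
  have QSome: "Q (Some (d,v)) = (under r d, \<lambda>y. if y \<in> under r d then (if y = d then v else z y) else undefined)" for d v
    unfolding Q_def by (simp add: fun_eq_iff)
  have SF: "\<And>d v. (d,v) \<in> S h1 \<Longrightarrow> d \<in> Field r \<and> d \<in> underS r h1 \<and> d \<notin> fst n \<and> v \<in> R \<and> v \<noteq> z d"
    unfolding S_def using underS_sub by blast
  have underF: "\<And>d y. y \<in> under r d \<Longrightarrow> y \<in> Field r" unfolding under_def by (auto intro: FieldI1)
  have QN: "Q j \<in> nodes r R" if j: "j \<in> J" for j
  proof (cases j)
    case None
    have "restrict z (underS r h1) \<in> underS r h1 \<rightarrow>\<^sub>E R" using zR underS_sub by auto
    thus ?thesis unfolding None QNone nodes_def using h1(1) by blast
  next
    case (Some dv)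
    then obtain d v where dv: "j = Some (d,v)" "(d,v) \<in> S h1" using j unfolding J_def by auto
    note d = SF[OF dv(2)]
    obtain e where e: "e \<in> Field r" "under r d = underS r e" using under_node d by blast
    have "(\<lambda>y. if y \<in> under r d then (if y = d then v else z y) else undefined) \<in> under r d \<rightarrow>\<^sub>E R"
      using d zR underF by auto
    thus ?thesis unfolding dv(1) QSome nodes_def using e by auto
  qed
  have Qle: "fst n \<subseteq> fst (Q j) \<and> (\<forall>y\<in>fst n. snd (Q j) y = snd n y)" if j: "j \<in> J" for j
  proof (cases j)
    case None
    show ?thesis unfolding None QNone using h1(3) zn by auto
  next
    case (Some dv)
    then obtain d v where dv: "j = Some (d,v)" "(d,v) \<in> S h1" using j unfolding J_def by auto
    note d = SF[OF dv(2)]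
    have a0d: "(a0, d) \<in> r"
    proof (cases "d = a0")
      case True thus ?thesis using RF a0(1) unfolding refl_on_def by auto
    next
      case False
      hence "(d, a0) \<notin> r" using d a0(2) unfolding underS_def by auto
      thus ?thesis using TOT[OF a0(1)] d by blast
    qed
    have "\<forall>y\<in>fst n. y \<in> under r d \<and> y \<noteq> d"
    proof
      fix y assume y: "y \<in> fst n"
      hence "(y,a0) \<in> r" using a0(2) unfolding underS_def by auto
      hence "(y,d) \<in> r" using a0d TR unfolding trans_def by blast
      moreover have "y \<noteq> d" using y d by blast
      ultimately show "y \<in> under r d \<and> y \<noteq> d" unfolding under_def by simp
    qed
    thus ?thesis unfolding dv(1) QSome using zn by auto
  qed
  have cylSome: "f d = v \<and> (\<forall>y\<in>underS r d. f y = z y)" if "f \<in> cyl r R (Q (Some (d,v)))" "d \<in> Field r" for f d v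
  proof -
    have "\<forall>y\<in>under r d. f y = (if y = d then v else z y)" using that(1) unfolding QSome cyl_def by auto
    moreover have "d \<in> under r d" "underS r d \<subseteq> under r d" using under_eq[OF that(2)] by auto
    ultimately show ?thesis unfolding underS_def by auto
  qed
  have cylNone: "\<forall>y\<in>underS r h1. f y = z y" if "f \<in> cyl r R (Q None)" for f
    using that unfolding QNone cyl_def by auto
  have Qdisj: "cyl r R (Q j) \<inter> cyl r R (Q j') = {}" if jj: "j \<in> J" "j' \<in> J" "j \<noteq> j'" for j j'
  proof -
    have key: "False" if kh: "f \<in> cyl r R (Q (Some (d,v)))" "f \<in> cyl r R (Q j2)" "(d,v) \<in> S h1" "j2 \<in> J" "j2 \<noteq> Some (d,v)"
      "\<And>d' v'. j2 = Some (d',v') \<Longrightarrow> (d, d') \<in> r"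
      for f d v j2
    proof -
      note d = SF[OF kh(3)]
      have fd: "f d = v" using cylSome[OF kh(1)] d by blast
      show False
      proof (cases j2)
        case None
        thus False using cylNone kh(2) d fd by auto
      next
        case (Some dv')
        then obtain d' v' where dv': "j2 = Some (d',v')" "(d',v') \<in> S h1" using kh(4) unfolding J_def by auto
        note d' = SF[OF dv'(2)]
        have fd': "f d' = v' \<and> (\<forall>y\<in>underS r d'. f y = z y)" using cylSome kh(2) dv'(1) d' by blast
        show False
        proof (cases "d = d'")
          case True thus False using fd fd' kh(5) dv'(1) by auto
        next
          case False
          hence "d \<in> underS r d'" using kh(6)[OF dv'(1)] unfolding underS_def by simp
          thus False using fd' fd d by auto
        qed
      qed
    qed
    show ?thesis
    proof (rule ccontr)
      assume "cyl r R (Q j) \<inter> cyl r R (Q j') \<noteq> {}"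
      then obtain f where f: "f \<in> cyl r R (Q j)" "f \<in> cyl r R (Q j')" by blast
      show False
      proof (cases j)
        case None
        then obtain d v where dv: "j' = Some (d,v)" "(d,v) \<in> S h1" using jj unfolding J_def by auto
        show False using key[OF _ _ dv(2) jj(1), of f] f dv(1) None by auto
      next
        case (Some dv)
        then obtain d v where dv: "j = Some (d,v)" "(d,v) \<in> S h1" using jj unfolding J_def by auto
        show False
        proof (cases j')
          case None
          show False using key[OF _ _ dv(2) jj(2), of f] f dv(1) None by auto
        next
          case (Some dv2)
          then obtain d' v' where dv': "j' = Some (d',v')" "(d',v') \<in> S h1" using jj unfolding J_def by auto
          have "d \<in> Field r" "d' \<in> Field r" using SF dv(2) dv'(2) by auto
          hence "(d,d') \<in> r \<or> (d',d) \<in> r" using TOT by blast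
          thus False
          proof
            assume "(d,d') \<in> r"
            thus False using key[OF _ _ dv(2) jj(2), of f] f dv(1) dv'(1) jj(3) by auto
          next
            assume "(d',d) \<in> r"
            thus False using key[OF _ _ dv'(2) jj(1), of f] f dv(1) dv'(1) jj(3) by auto
          qed
        qed
      qed
    qed
  qed
  have Qcov: "\<exists>j\<in>J. f \<in> cyl r R (Q j)" if f: "f \<in> cyl r R n" for f
  proof (cases "\<forall>y\<in>underS r h1. f y = z y")
    case True
    have "f \<in> cyl r R (Q None)" using True f unfolding QNone cyl_def by auto
    thus ?thesis unfolding J_def by blast
  next
    case False
    define Dif where "Dif = {y \<in> underS r h1. f y \<noteq> z y}"
    have Dne: "Dif \<noteq> {}" using False unfolding Dif_def by blast
    have DF: "Dif \<subseteq> Field r" unfolding Dif_def using underS_sub by blast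
    define d where "d = wo_rel.minim r Dif"
    have dD: "d \<in> Dif" unfolding d_def using wo_rel.minim_in[OF wo DF Dne] .
    have dmin: "\<And>y. y \<in> Dif \<Longrightarrow> (d,y) \<in> r" unfolding d_def using wo_rel.minim_least[OF wo DF] by blast
    have fc: "f \<in> bd_carrier r R" "\<forall>y\<in>fst n. f y = snd n y" using f unfolding cyl_def by auto
    have dF: "d \<in> Field r" using dD DF by blast
    have dn: "d \<notin> fst n" using dD fc(2) zn unfolding Dif_def by auto
    have dS: "(d, f d) \<in> S h1" using dD dn carrier_R[OF fc(1) dF] unfolding S_def Dif_def by auto
    have "\<forall>y\<in>under r d. f y = (if y = d then f d else z y)"
    proof
      fix y assume y: "y \<in> under r d"
      show "f y = (if y = d then f d else z y)"
      proof (cases "y = d")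
        case False
        have yd: "(y,d) \<in> r" using y unfolding under_def by simp
        have "y \<in> underS r h1" using underS_trans1[OF yd] dD unfolding Dif_def by blast
        moreover have "y \<notin> Dif"
        proof
          assume "y \<in> Dif"
          hence "(d,y) \<in> r" using dmin by blast
          thus False using yd False AS unfolding antisym_def by blast
        qed
        ultimately show ?thesis using False unfolding Dif_def by auto
      qed simp
    qed
    hence "f \<in> cyl r R (Q (Some (d, f d)))" using fc(1) unfolding QSome cyl_def by auto
    moreover have "Some (d, f d) \<in> J" using dS unfolding J_def by blast
    ultimately show ?thesis by blast
  qed
  have "\<forall>j\<in>J. \<exists>H\<in>Field r. b \<in> underS r H \<and> fst (Q j) \<subseteq> underS r H \<and>
      (\<exists>\<phi>. inj_on \<phi> (underS r (\<sigma> j)) \<and> \<phi> ` underS r (\<sigma> j) \<subseteq> underS r H - fst (Q j))"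
  proof
    fix j assume j: "j \<in> J"
    obtain l where l: "l \<in> Field r" "fst (Q j) = underS r l" using nodesD[OF QN[OF j]] by blast
    have "\<sigma> j \<in> Field r" using \<sigma> j K(1) by blast
    thus "\<exists>H\<in>Field r. b \<in> underS r H \<and> fst (Q j) \<subseteq> underS r H \<and>
      (\<exists>\<phi>. inj_on \<phi> (underS r (\<sigma> j)) \<and> \<phi> ` underS r (\<sigma> j) \<subseteq> underS r H - fst (Q j))"
      using tail2[OF l(1) _ b] l(2) by simp
  qed
  then obtain H where H: "\<And>j. j \<in> J \<Longrightarrow> H j \<in> Field r \<and> b \<in> underS r (H j) \<and> fst (Q j) \<subseteq> underS r (H j) \<and>
      (\<exists>\<phi>. inj_on \<phi> (underS r (\<sigma> j)) \<and> \<phi> ` underS r (\<sigma> j) \<subseteq> underS r (H j) - fst (Q j))"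
    by metis
  define EN where "EN j = {(underS r (H j), t) | t. t \<in> underS r (H j) \<rightarrow>\<^sub>E R \<and> (\<forall>y\<in>fst (Q j). t y = snd (Q j) y)}" for j
  define P where "P = (\<Union>j\<in>J. EN j)"
  have ENn: "p \<in> nodes r R" if "j \<in> J" "p \<in> EN j" for j p
    using that H unfolding EN_def nodes_def by blast
  have ENle: "fst (Q j) \<subseteq> fst p \<and> (\<forall>y\<in>fst (Q j). snd p y = snd (Q j) y)" if "j \<in> J" "p \<in> EN j" for j p
    using that H[OF that(1)] unfolding EN_def by auto
  have ENcyl: "cyl r R p \<subseteq> cyl r R (Q j)" if "j \<in> J" "p \<in> EN j" for j p
    using cyl_le[OF QN[OF that(1)] ENn[OF that] ] ENle[OF that] by blast
  have P1: "P \<subseteq> nodes r R" unfolding P_def using ENn by blast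
  have P2: "\<forall>p\<in>P. b \<in> fst p \<and> fst n \<subseteq> fst p \<and> (\<forall>y\<in>fst n. snd p y = snd n y)"
  proof
    fix p assume "p \<in> P"
    then obtain j where j: "j \<in> J" "p \<in> EN j" unfolding P_def by blast
    have "b \<in> fst p" using j H[OF j(1)] unfolding EN_def by auto
    moreover have "fst n \<subseteq> fst p" using Qle[OF j(1)] ENle[OF j] by blast
    moreover have "\<forall>y\<in>fst n. snd p y = snd n y" using Qle[OF j(1)] ENle[OF j] by auto
    ultimately show "b \<in> fst p \<and> fst n \<subseteq> fst p \<and> (\<forall>y\<in>fst n. snd p y = snd n y)" by blast
  qed
  have P3: "\<forall>p\<in>P. \<forall>q\<in>P. p \<noteq> q \<longrightarrow> cyl r R p \<inter> cyl r R q = {}"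
  proof (intro ballI impI)
    fix p q assume p: "p \<in> P" and q: "q \<in> P" and pq: "p \<noteq> q"
    obtain j where j: "j \<in> J" "p \<in> EN j" using p unfolding P_def by blast
    obtain j' where j': "j' \<in> J" "q \<in> EN j'" using q unfolding P_def by blast
    show "cyl r R p \<inter> cyl r R q = {}"
    proof (cases "j = j'")
      case True
      have "fst p = fst q" using j j' True unfolding EN_def by auto
      thus ?thesis using cyl_disj_same[OF ENn[OF j] ENn[OF j'] _ pq] by blast
    next
      case False
      thus ?thesis using Qdisj[OF j(1) j'(1) False] ENcyl[OF j] ENcyl[OF j'] by blast
    qed
  qed
  have P4: "cyl r R n \<subseteq> \<Union>(cyl r R ` P)"
  proof
    fix f assume f: "f \<in> cyl r R n"
    obtain j where j: "j \<in> J" "f \<in> cyl r R (Q j)" using Qcov[OF f] by blast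
    have fc: "f \<in> bd_carrier r R" using f unfolding cyl_def by auto
    let ?p = "(underS r (H j), restrict f (underS r (H j)))"
    have "restrict f (underS r (H j)) \<in> underS r (H j) \<rightarrow>\<^sub>E R" using carrier_R[OF fc] underS_sub by auto
    moreover have "\<forall>y\<in>fst (Q j). restrict f (underS r (H j)) y = snd (Q j) y"
      using j(2) H[OF j(1)] unfolding cyl_def by auto
    ultimately have "?p \<in> EN j" unfolding EN_def by blast
    hence "?p \<in> P" using j(1) unfolding P_def by blast
    moreover have "f \<in> cyl r R ?p" using fc unfolding cyl_def by auto
    ultimately show "f \<in> \<Union>(cyl r R ` P)" by blast
  qed
  have P5: "|P| =o |nodes r R|"
  proof -
    have "|P| \<le>o |nodes r R|" using card_of_mono1[OF P1] .
    moreover have "|nodes r R| \<le>o |P|"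
    proof (rule nodes_le, intro ballI)
      fix a assume a: "a \<in> Field r"
      obtain k where k: "k \<in> K" "a \<noteq> k" "(a,k) \<in> r" using K(2) a unfolding cofinal_def by blast
      obtain j where j: "j \<in> J" "\<sigma> j = k" using \<sigma> k(1) by blast
      have ak: "underS r a \<subseteq> underS r (\<sigma> j)" using underS_mono k j(2) unfolding underS_def by blast
      obtain \<phi> where \<phi>: "inj_on \<phi> (underS r (\<sigma> j))" "\<phi> ` underS r (\<sigma> j) \<subseteq> underS r (H j) - fst (Q j)"
        using H[OF j(1)] by blast
      have \<phi>a: "inj_on \<phi> (underS r a)" "\<phi> ` underS r a \<subseteq> underS r (H j) - fst (Q j)"
        using \<phi> ak inj_on_subset by blast+
      define emb where "emb t = (underS r (H j), \<lambda>y. if y \<in> fst (Q j) then snd (Q j) y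
          else if y \<in> \<phi> ` underS r a then t (inv_into (underS r a) \<phi> y)
          else if y \<in> underS r (H j) then r0 else undefined)" for t
      have "inj_on emb (underS r a \<rightarrow>\<^sub>E R)"
      proof (rule inj_onI)
        fix t t' assume t: "t \<in> underS r a \<rightarrow>\<^sub>E R" and t': "t' \<in> underS r a \<rightarrow>\<^sub>E R" and eq: "emb t = emb t'"
        show "t = t'"
        proof (rule PiE_ext[OF t t'])
          fix y assume y: "y \<in> underS r a"
          have "\<phi> y \<notin> fst (Q j)" "\<phi> y \<in> \<phi> ` underS r a" using \<phi>a(2) y by auto
          moreover have "inv_into (underS r a) \<phi> (\<phi> y) = y" using \<phi>a(1) y by (rule inv_into_f_f)
          moreover have "snd (emb t) (\<phi> y) = snd (emb t') (\<phi> y)" using eq by simp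
          ultimately show "t y = t' y" unfolding emb_def by simp
        qed
      qed
      moreover have "emb t \<in> P" if t: "t \<in> underS r a \<rightarrow>\<^sub>E R" for t
      proof -
        have QR: "\<forall>y\<in>fst (Q j). snd (Q j) y \<in> R" using nodesD[OF QN[OF j(1)]] by auto
        have "inv_into (underS r a) \<phi> y \<in> underS r a" if "y \<in> \<phi> ` underS r a" for y
          using that by (simp add: inv_into_into)
        hence "snd (emb t) \<in> underS r (H j) \<rightarrow>\<^sub>E R"
          using QR t r0 H[OF j(1)] \<phi>a(2) unfolding emb_def by (auto simp: PiE_iff extensional_def)
        moreover have "\<forall>y\<in>fst (Q j). snd (emb t) y = snd (Q j) y" unfolding emb_def by simp
        ultimately have "emb t \<in> EN j" unfolding EN_def emb_def by auto
        thus ?thesis using j(1) unfolding P_def by blast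
      qed
      ultimately show "|underS r a \<rightarrow>\<^sub>E R| \<le>o |P|" by (rule card_of_ordLeqI)
    qed
    ultimately show ?thesis by (simp add: ordIso_iff_ordLeq)
  qed
  show ?thesis unfolding partprop_def using P1 P2 P3 P4 P5 by blast
qed

end

definition limnode :: "'i set \<Rightarrow> ('i \<Rightarrow> 'd set \<times> ('d \<Rightarrow> 'c)) \<Rightarrow> 'd set \<times> ('d \<Rightarrow> 'c)" where
  "limnode I N = ((\<Union>i\<in>I. fst (N i)),
     \<lambda>y. if \<exists>i\<in>I. y \<in> fst (N i) then snd (N (SOME i. i \<in> I \<and> y \<in> fst (N i))) y else undefined)"

lemma limnode_cong: assumes h: "\<And>i. i \<in> I \<Longrightarrow> N i = N' i" shows "limnode I N = limnode I N'"
proof -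
  have P: "(\<lambda>i. i \<in> I \<and> y \<in> fst (N i)) = (\<lambda>i. i \<in> I \<and> y \<in> fst (N' i))" for y
    using h by (auto simp: fun_eq_iff)
  have 1: "(\<Union>i\<in>I. fst (N i)) = (\<Union>i\<in>I. fst (N' i))" using h by auto
  have 2: "snd (N (SOME i. i \<in> I \<and> y \<in> fst (N i))) y = snd (N' (SOME i. i \<in> I \<and> y \<in> fst (N' i))) y"
    if "\<exists>i\<in>I. y \<in> fst (N i)" for y
  proof -
    have "(SOME i. i \<in> I \<and> y \<in> fst (N i)) \<in> I" using someI_ex[of "\<lambda>i. i \<in> I \<and> y \<in> fst (N i)"] that by blast
    thus ?thesis using P[of y] h by simp
  qed
  have 3: "(\<exists>i\<in>I. y \<in> fst (N i)) = (\<exists>i\<in>I. y \<in> fst (N' i))" for y using h by auto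
  show ?thesis unfolding limnode_def using 1 2 3 by (auto simp: fun_eq_iff)
qed

definition nle :: "'d set \<times> ('d \<Rightarrow> 'c) \<Rightarrow> 'd set \<times> ('d \<Rightarrow> 'c) \<Rightarrow> bool" where
  "nle n m \<longleftrightarrow> fst n \<subseteq> fst m \<and> (\<forall>y\<in>fst n. snd m y = snd n y)"

lemma nle_trans: "nle a b \<Longrightarrow> nle b c \<Longrightarrow> nle a c"
  unfolding nle_def by auto

lemma nle_refl: "nle a a" unfolding nle_def by auto

lemma cyl_nle: "nle n m \<Longrightarrow> cyl r R m \<subseteq> cyl r R n"
  unfolding nle_def cyl_def by auto

lemma limnode_le: assumes coh: "\<And>i j y. i \<in> I \<Longrightarrow> j \<in> I \<Longrightarrow> y \<in> fst (N i) \<Longrightarrow> y \<in> fst (N j) \<Longrightarrow> snd (N i) y = snd (N j) y"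
  and i: "i \<in> I" shows "nle (N i) (limnode I N)"
  unfolding nle_def
proof (intro conjI ballI)
  show "fst (N i) \<subseteq> fst (limnode I N)" using i unfolding limnode_def by auto
next
  fix y assume y: "y \<in> fst (N i)"
  let ?i = "SOME i. i \<in> I \<and> y \<in> fst (N i)"
  have "?i \<in> I \<and> y \<in> fst (N ?i)" using someI_ex[of "\<lambda>i. i \<in> I \<and> y \<in> fst (N i)"] y i by blast
  hence "snd (N ?i) y = snd (N i) y" using coh i y by blast
  thus "snd (limnode I N) y = snd (N i) y" using y i unfolding limnode_def by auto
qed

lemma limnode_cyl: assumes "f \<in> bd_carrier r R" "\<And>i. i \<in> I \<Longrightarrow> f \<in> cyl r R (N i)"
  shows "f \<in> cyl r R (limnode I N)"
proof -
  have "f y = snd (limnode I N) y" if y: "y \<in> fst (limnode I N)" for y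
  proof -
    have ex: "\<exists>i\<in>I. y \<in> fst (N i)" using y unfolding limnode_def by auto
    let ?i = "SOME i. i \<in> I \<and> y \<in> fst (N i)"
    have "?i \<in> I \<and> y \<in> fst (N ?i)" using someI_ex[of "\<lambda>i. i \<in> I \<and> y \<in> fst (N i)"] ex by blast
    hence "f y = snd (N ?i) y" using assms(2) unfolding cyl_def by blast
    thus ?thesis using ex unfolding limnode_def by simp
  qed
  thus ?thesis using assms(1) unfolding cyl_def by auto
qed

lemma limnode_PiE: assumes "\<And>i. i \<in> I \<Longrightarrow> snd (N i) \<in> fst (N i) \<rightarrow>\<^sub>E R"
  shows "snd (limnode I N) \<in> fst (limnode I N) \<rightarrow>\<^sub>E R"
proof -
  have "snd (limnode I N) y \<in> R" if y: "y \<in> fst (limnode I N)" for y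
  proof -
    have ex: "\<exists>i\<in>I. y \<in> fst (N i)" using y unfolding limnode_def by auto
    let ?i = "SOME i. i \<in> I \<and> y \<in> fst (N i)"
    have "?i \<in> I \<and> y \<in> fst (N ?i)" using someI_ex[of "\<lambda>i. i \<in> I \<and> y \<in> fst (N i)"] ex by blast
    hence "snd (N ?i) y \<in> R" using assms by blast
    thus ?thesis using ex unfolding limnode_def by simp
  qed
  moreover have "snd (limnode I N) y = undefined" if "y \<notin> fst (limnode I N)" for y
    using that unfolding limnode_def by auto
  ultimately show ?thesis by (auto simp: PiE_iff extensional_def)
qed

lemma partpropD:
  assumes "partprop r R n b P"
  shows "P \<subseteq> nodes r R" "\<And>p. p \<in> P \<Longrightarrow> b \<in> fst p" "\<And>p. p \<in> P \<Longrightarrow> nle n p"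
    "\<And>p q. p \<in> P \<Longrightarrow> q \<in> P \<Longrightarrow> p \<noteq> q \<Longrightarrow> cyl r R p \<inter> cyl r R q = {}"
    "cyl r R n \<subseteq> \<Union>(cyl r R ` P)" "|P| =o |nodes r R|"
proof -
  have h: "P \<subseteq> nodes r R \<and>
     (\<forall>p\<in>P. b \<in> fst p \<and> fst n \<subseteq> fst p \<and> (\<forall>y\<in>fst n. snd p y = snd n y)) \<and>
     (\<forall>p\<in>P. \<forall>q\<in>P. p \<noteq> q \<longrightarrow> cyl r R p \<inter> cyl r R q = {}) \<and>
     cyl r R n \<subseteq> \<Union>(cyl r R ` P) \<and> |P| =o |nodes r R|" using assms unfolding partprop_def .
  note h1 = conjunct1[OF h] and h2 = conjunct1[OF conjunct2[OF h]]
    and h3 = conjunct1[OF conjunct2[OF conjunct2[OF h]]]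
    and h4 = conjunct1[OF conjunct2[OF conjunct2[OF conjunct2[OF h]]]]
    and h5 = conjunct2[OF conjunct2[OF conjunct2[OF conjunct2[OF h]]]]
  show "P \<subseteq> nodes r R" by (rule h1)
  show "\<And>p. p \<in> P \<Longrightarrow> b \<in> fst p" using h2 by simp
  show "\<And>p. p \<in> P \<Longrightarrow> nle n p" using h2 unfolding nle_def by simp
  show "\<And>p q. p \<in> P \<Longrightarrow> q \<in> P \<Longrightarrow> p \<noteq> q \<Longrightarrow> cyl r R p \<inter> cyl r R q = {}" using h3 by simp
  show "cyl r R n \<subseteq> \<Union>(cyl r R ` P)" by (rule h4)
  show "|P| =o |nodes r R|" by (rule h5)
qed

context bdsp begin

lemma nodes_inf: "infinite (nodes r R)"
proof -
  let ?g = "\<lambda>a. (underS r a, restrict (\<lambda>_. r0) (underS r a))"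
  have "inj_on ?g (Field r)"
  proof (rule inj_onI)
    fix a b assume "a \<in> Field r" "b \<in> Field r" "?g a = ?g b"
    hence "underS r a = underS r b" "a \<in> Field r" "b \<in> Field r" by auto
    thus "a = b" using wo_rel.suc_underS[OF wo, of a] wo_rel.suc_underS[OF wo, of b] by simp
  qed
  moreover have "?g ` Field r \<subseteq> nodes r R"
  proof
    fix x assume "x \<in> ?g ` Field r"
    then obtain a where a: "a \<in> Field r" "x = ?g a" by blast
    have "restrict (\<lambda>_. r0) (underS r a) \<in> underS r a \<rightarrow>\<^sub>E R" using r0 by simp
    thus "x \<in> nodes r R" unfolding a(2) nodes_def using a(1) by blast
  qed
  moreover have "infinite (?g ` Field r)" using INF by (simp add: finite_image_iff[OF calculation(1)])
  ultimately show ?thesis using infinite_super by blast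
qed

end

locale bdsp3 = bdsp2 r R kappa for r :: "'d rel" and R :: "'c set" and kappa :: "'k rel" +
  fixes W :: "'w set"
  assumes Wc: "|W| =o |nodes r R|"
begin

lemma Winf: "infinite W" using card_of_ordIso_finite[OF Wc] nodes_inf by blast

lemma bdspK: "bdsp kappa W"
proof
  show "Card_order kappa" by (rule COk)
  show "infinite (Field kappa)" by (rule INFk)
  have "W \<noteq> {}" using Winf by auto
  then obtain a where a: "a \<in> W" by blast
  have "infinite (W - {a})" using Winf by simp
  have "W - {a} \<noteq> {}"
  proof
    assume "W - {a} = {}"
    hence "W \<subseteq> {a}" by blast
    hence "finite W" using finite_subset by blast
    thus False using Winf by simp
  qed
  then obtain b where b: "b \<in> W - {a}" by blast
  show "\<exists>r0 r1. r0 \<in> W \<and> r1 \<in> W \<and> r0 \<noteq> r1" using a b by blast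
qed

abbreviation uk where "uk \<equiv> underS kappa"

definition Parts where "Parts n b = (SOME P. partprop r R n b P)"

lemma Parts: assumes "n \<in> nodes r R" "b \<in> Field r" shows "partprop r R n b (Parts n b)"
  unfolding Parts_def by (rule someI_ex[OF partition[OF assms]])

definition iota where "iota n b = (SOME \<iota>. bij_betw \<iota> W (Parts n b))"

lemma iota: assumes "n \<in> nodes r R" "b \<in> Field r" shows "bij_betw (iota n b) W (Parts n b)"
proof -
  have "|Parts n b| =o |nodes r R|" using partpropD(6)[OF Parts[OF assms]] .
  hence "|W| =o |Parts n b|" by (rule ordIso_transitive[OF Wc ordIso_symmetric])
  hence "\<exists>\<iota>. bij_betw \<iota> W (Parts n b)" using card_of_ordIso by blast
  thus ?thesis unfolding iota_def by (rule someI_ex)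
qed

definition cK where "cK = (SOME c. (\<forall>\<zeta>\<in>Field kappa. c \<zeta> \<in> Field r) \<and> (\<forall>a\<in>Field r. \<exists>\<zeta>\<in>Field kappa. a \<in> underS r (c \<zeta>)))"

lemma cK: "(\<forall>\<zeta>\<in>Field kappa. cK \<zeta> \<in> Field r) \<and> (\<forall>a\<in>Field r. \<exists>\<zeta>\<in>Field kappa. a \<in> underS r (cK \<zeta>))"
proof -
  obtain K where K: "K \<subseteq> Field r" "cofinal K r" "|K| \<le>o |Field kappa|" using K_ex by blast
  have Kne: "K \<noteq> {}"
  proof -
    have "Field r \<noteq> {}" using INF by auto
    then obtain a where "a \<in> Field r" by blast
    thus ?thesis using K(2) unfolding cofinal_def by blast
  qed
  have "\<exists>g. g ` Field kappa = K" using card_of_ordLeq2[OF Kne, of "Field kappa"] K(3) by simp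
  then obtain g where g: "g ` Field kappa = K" by blast
  have "(\<forall>\<zeta>\<in>Field kappa. g \<zeta> \<in> Field r) \<and> (\<forall>a\<in>Field r. \<exists>\<zeta>\<in>Field kappa. a \<in> underS r (g \<zeta>))"
  proof (intro conjI ballI)
    fix \<zeta> assume "\<zeta> \<in> Field kappa" thus "g \<zeta> \<in> Field r" using g K(1) by blast
  next
    fix a assume "a \<in> Field r"
    then obtain k where "k \<in> K" "a \<noteq> k" "(a,k) \<in> r" using K(2) unfolding cofinal_def by blast
    thus "\<exists>\<zeta>\<in>Field kappa. a \<in> underS r (g \<zeta>)" using g unfolding underS_def by blast
  qed
  thus ?thesis unfolding cK_def
    by (rule someI[of "\<lambda>c. (\<forall>\<zeta>\<in>Field kappa. c \<zeta> \<in> Field r) \<and> (\<forall>a\<in>Field r. \<exists>\<zeta>\<in>Field kappa. a \<in> underS r (c \<zeta>))" g])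
qed

definition ismax where "ismax \<xi> \<zeta> \<longleftrightarrow> \<zeta> \<in> uk \<xi> \<and> (\<forall>y\<in>uk \<xi>. (y,\<zeta>) \<in> kappa)"

definition Hrec where
  "Hrec M \<xi> = (\<lambda>t. if (\<exists>\<zeta>. ismax \<xi> \<zeta>)
      then iota (M (THE \<zeta>. ismax \<xi> \<zeta>) (restrict t (uk (THE \<zeta>. ismax \<xi> \<zeta>)))) (cK (THE \<zeta>. ismax \<xi> \<zeta>)) (t (THE \<zeta>. ismax \<xi> \<zeta>))
      else limnode (uk \<xi>) (\<lambda>\<zeta>. M \<zeta> (restrict t (uk \<zeta>))))"

definition Mrec where "Mrec = wo_rel.worec kappa Hrec"

lemma woK: "wo_rel kappa" using bdsp.wo[OF bdspK] .

lemma ismax_uk: "ismax \<xi> \<zeta> \<Longrightarrow> \<zeta> \<in> uk \<xi>" unfolding ismax_def by simp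

lemma ismax_unique: assumes "ismax \<xi> \<zeta>1" "ismax \<xi> \<zeta>2" shows "\<zeta>1 = \<zeta>2"
proof -
  have "(\<zeta>1,\<zeta>2) \<in> kappa" "(\<zeta>2,\<zeta>1) \<in> kappa" using assms unfolding ismax_def by auto
  thus ?thesis using bdsp.AS[OF bdspK] unfolding antisym_def by blast
qed

lemma the_ismax: "ismax \<xi> \<zeta> \<Longrightarrow> (THE \<zeta>'. ismax \<xi> \<zeta>') = \<zeta>"
  using ismax_unique by blast

lemma adm: "wo_rel.adm_wo kappa Hrec"
  unfolding wo_rel.adm_wo_def[OF woK]
proof (intro allI impI)
  fix f g :: "'k \<Rightarrow> ('k \<Rightarrow> 'w) \<Rightarrow> 'd set \<times> ('d \<Rightarrow> 'c)" and x
  assume h: "\<forall>y\<in>uk x. f y = g y"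
  show "Hrec f x = Hrec g x"
  proof (cases "\<exists>\<zeta>. ismax x \<zeta>")
    case True
    then obtain \<zeta> where z: "ismax x \<zeta>" by blast
    have "f \<zeta> = g \<zeta>" using h ismax_uk[OF z] by blast
    thus ?thesis unfolding Hrec_def using True the_ismax[OF z] by simp
  next
    case False
    have "limnode (uk x) (\<lambda>\<zeta>. f \<zeta> (restrict t (uk \<zeta>))) = limnode (uk x) (\<lambda>\<zeta>. g \<zeta> (restrict t (uk \<zeta>)))" for t
      by (rule limnode_cong) (use h in simp)
    moreover have "Hrec f x = (\<lambda>t. limnode (uk x) (\<lambda>\<zeta>. f \<zeta> (restrict t (uk \<zeta>))))"
      unfolding Hrec_def if_not_P[OF False] ..
    moreover have "Hrec g x = (\<lambda>t. limnode (uk x) (\<lambda>\<zeta>. g \<zeta> (restrict t (uk \<zeta>))))"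
      unfolding Hrec_def if_not_P[OF False] ..
    ultimately show ?thesis by (simp add: fun_eq_iff)
  qed
qed

lemma Mrec_eq: "Mrec \<xi> t = Hrec Mrec \<xi> t"
proof -
  have e: "Mrec = Hrec Mrec" unfolding Mrec_def by (rule wo_rel.worec_fixpoint[OF woK adm])
  show ?thesis by (rule fun_cong[OF fun_cong[OF e]])
qed

lemma Mrec_succ: assumes z: "ismax \<xi> \<zeta>" shows "Mrec \<xi> t = iota (Mrec \<zeta> (restrict t (uk \<zeta>))) (cK \<zeta>) (t \<zeta>)"
proof -
  have e: "\<exists>\<zeta>. ismax \<xi> \<zeta>" using z by blast
  show ?thesis using Mrec_eq[of \<xi> t] unfolding Hrec_def if_P[OF e] the_ismax[OF z] .
qed

lemma Mrec_lim: assumes h: "\<not> (\<exists>\<zeta>. ismax \<xi> \<zeta>)" shows "Mrec \<xi> t = limnode (uk \<xi>) (\<lambda>\<zeta>. Mrec \<zeta> (restrict t (uk \<zeta>)))"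
  using Mrec_eq[of \<xi> t] unfolding Hrec_def if_not_P[OF h] .

lemma uk_succ: assumes "ismax \<xi> \<zeta>" shows "uk \<xi> = insert \<zeta> (uk \<zeta>)"
proof
  show "uk \<xi> \<subseteq> insert \<zeta> (uk \<zeta>)" using assms unfolding ismax_def underS_def by auto
  show "insert \<zeta> (uk \<zeta>) \<subseteq> uk \<xi>"
    using assms bdsp.underS_trans2[OF bdspK] unfolding ismax_def by blast
qed

lemma uk_lim: assumes "\<not> (\<exists>\<zeta>. ismax \<xi> \<zeta>)" "\<zeta> \<in> uk \<xi>" shows "\<exists>\<zeta>'\<in>uk \<xi>. \<zeta> \<in> uk \<zeta>'"
proof -
  obtain y where y: "y \<in> uk \<xi>" "(y,\<zeta>) \<notin> kappa" using assms unfolding ismax_def by blast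
  have "\<zeta> \<in> Field kappa" "y \<in> Field kappa" using assms(2) y(1) bdsp.in_Field_underS[OF bdspK] by blast+
  hence "(\<zeta>,y) \<in> kappa" using bdsp.TOT[OF bdspK] y(2) by blast
  moreover have "\<zeta> \<noteq> y" using y(2) bdsp.RF[OF bdspK] \<open>y \<in> Field kappa\<close> unfolding refl_on_def by blast
  ultimately show ?thesis using y(1) unfolding underS_def by blast
qed

lemma restrict_restrict_uk: "\<zeta>' \<in> uk \<zeta> \<Longrightarrow> restrict (restrict t (uk \<zeta>)) (uk \<zeta>') = restrict t (uk \<zeta>')"
  using bdsp.underS_mono[OF bdspK] by (auto simp: fun_eq_iff restrict_def)

lemma restrict_level: "t \<in> uk \<xi> \<rightarrow>\<^sub>E W \<Longrightarrow> \<zeta> \<in> uk \<xi> \<Longrightarrow> restrict t (uk \<zeta>) \<in> uk \<zeta> \<rightarrow>\<^sub>E W"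
  using bdsp.underS_mono[OF bdspK] by (auto simp: PiE_iff)

definition INVP where "INVP \<xi> \<longleftrightarrow>
  (\<forall>t\<in>uk \<xi> \<rightarrow>\<^sub>E W. Mrec \<xi> t \<in> nodes r R \<and>
      (\<forall>\<zeta>\<in>uk \<xi>. nle (Mrec \<zeta> (restrict t (uk \<zeta>))) (Mrec \<xi> t) \<and> cK \<zeta> \<in> fst (Mrec \<xi> t))) \<and>
  (\<forall>f\<in>bd_carrier r R. \<exists>!t. t \<in> uk \<xi> \<rightarrow>\<^sub>E W \<and> f \<in> cyl r R (Mrec \<xi> t))"

lemma cyl_carrier: "f \<in> cyl r R n \<Longrightarrow> f \<in> bd_carrier r R" unfolding cyl_def by simp

lemma succ_step: assumes xi: "\<xi> \<in> Field kappa" and z: "ismax \<xi> \<zeta>" and IH: "INVP \<zeta>"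
  shows "INVP \<xi>"
proof -
  have ukx: "uk \<xi> = insert \<zeta> (uk \<zeta>)" using uk_succ[OF z] .
  have zF: "\<zeta> \<in> Field kappa" using ismax_uk[OF z] bdsp.in_Field_underS[OF bdspK] by blast
  have cz: "cK \<zeta> \<in> Field r" using cK zF by blast
  have znot: "\<zeta> \<notin> uk \<zeta>" unfolding underS_def by simp
  have IH1: "\<And>t. t \<in> uk \<zeta> \<rightarrow>\<^sub>E W \<Longrightarrow> Mrec \<zeta> t \<in> nodes r R \<and>
      (\<forall>\<zeta>'\<in>uk \<zeta>. nle (Mrec \<zeta>' (restrict t (uk \<zeta>'))) (Mrec \<zeta> t) \<and> cK \<zeta>' \<in> fst (Mrec \<zeta> t))"
    using IH unfolding INVP_def by blast
  have IH2: "\<And>f. f \<in> bd_carrier r R \<Longrightarrow> \<exists>!t. t \<in> uk \<zeta> \<rightarrow>\<^sub>E W \<and> f \<in> cyl r R (Mrec \<zeta> t)"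
    using IH unfolding INVP_def by blast
  have rl: "restrict t (uk \<zeta>) \<in> uk \<zeta> \<rightarrow>\<^sub>E W" if "t \<in> uk \<xi> \<rightarrow>\<^sub>E W" for t
    using that ukx by (auto simp: PiE_iff)
  have tz: "t \<zeta> \<in> W" if "t \<in> uk \<xi> \<rightarrow>\<^sub>E W" for t using that ukx by auto
  have P1: "Mrec \<xi> t \<in> nodes r R \<and>
      (\<forall>\<zeta>'\<in>uk \<xi>. nle (Mrec \<zeta>' (restrict t (uk \<zeta>'))) (Mrec \<xi> t) \<and> cK \<zeta>' \<in> fst (Mrec \<xi> t))"
    if t: "t \<in> uk \<xi> \<rightarrow>\<^sub>E W" for t
  proof -
    let ?t' = "restrict t (uk \<zeta>)"
    let ?m = "Mrec \<zeta> ?t'"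
    have m: "?m \<in> nodes r R" using IH1[OF rl[OF t]] by blast
    have pp: "partprop r R ?m (cK \<zeta>) (Parts ?m (cK \<zeta>))" using Parts[OF m cz] .
    have inP: "iota ?m (cK \<zeta>) (t \<zeta>) \<in> Parts ?m (cK \<zeta>)"
      using iota[OF m cz] tz[OF t] unfolding bij_betw_def by blast
    have Mx: "Mrec \<xi> t = iota ?m (cK \<zeta>) (t \<zeta>)" using Mrec_succ[OF z] .
    have node: "Mrec \<xi> t \<in> nodes r R" using partpropD(1)[OF pp] inP unfolding Mx by blast
    have le1: "nle ?m (Mrec \<xi> t)" using partpropD(3)[OF pp inP] unfolding Mx .
    have c1: "cK \<zeta> \<in> fst (Mrec \<xi> t)" using partpropD(2)[OF pp inP] unfolding Mx .
    have "nle (Mrec \<zeta>' (restrict t (uk \<zeta>'))) (Mrec \<xi> t) \<and> cK \<zeta>' \<in> fst (Mrec \<xi> t)" if z': "\<zeta>' \<in> uk \<xi>" for \<zeta>'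
    proof (cases "\<zeta>' = \<zeta>")
      case True thus ?thesis using le1 c1 by simp
    next
      case False
      hence z'': "\<zeta>' \<in> uk \<zeta>" using z' ukx by blast
      have A0: "nle (Mrec \<zeta>' (restrict ?t' (uk \<zeta>'))) ?m" and B: "cK \<zeta>' \<in> fst ?m" using IH1[OF rl[OF t]] z'' by blast+
      have "restrict ?t' (uk \<zeta>') = restrict t (uk \<zeta>')" using restrict_restrict_uk[OF z''] .
      hence A: "nle (Mrec \<zeta>' (restrict t (uk \<zeta>'))) ?m" using A0 by simp
      have "fst ?m \<subseteq> fst (Mrec \<xi> t)" using le1 unfolding nle_def by blast
      thus ?thesis using nle_trans[OF A le1] B by blast
    qed
    thus ?thesis using node by blast
  qed
  have P2: "\<exists>!t. t \<in> uk \<xi> \<rightarrow>\<^sub>E W \<and> f \<in> cyl r R (Mrec \<xi> t)" if f: "f \<in> bd_carrier r R" for f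
  proof -
    obtain t0 where t0: "t0 \<in> uk \<zeta> \<rightarrow>\<^sub>E W" "f \<in> cyl r R (Mrec \<zeta> t0)" using IH2[OF f] by blast
    have m: "Mrec \<zeta> t0 \<in> nodes r R" using IH1[OF t0(1)] by blast
    have pp: "partprop r R (Mrec \<zeta> t0) (cK \<zeta>) (Parts (Mrec \<zeta> t0) (cK \<zeta>))" using Parts[OF m cz] .
    obtain p where p: "p \<in> Parts (Mrec \<zeta> t0) (cK \<zeta>)" "f \<in> cyl r R p" using partpropD(5)[OF pp] t0(2) by blast
    obtain w where w: "w \<in> W" "p = iota (Mrec \<zeta> t0) (cK \<zeta>) w" using iota[OF m cz] p(1) unfolding bij_betw_def by blast
    define t where "t = (\<lambda>y. if y = \<zeta> then w else t0 y)"
    have tl: "t \<in> uk \<xi> \<rightarrow>\<^sub>E W" using t0(1) w(1) ukx unfolding t_def by (auto simp: PiE_iff extensional_def)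
    have rt: "restrict t (uk \<zeta>) = t0" using t0(1) znot unfolding t_def by (auto simp: fun_eq_iff restrict_def PiE_iff extensional_def)
    have "Mrec \<xi> t = p" using Mrec_succ[OF z, of t] rt w(2) unfolding t_def by simp
    hence ex: "f \<in> cyl r R (Mrec \<xi> t)" using p(2) by simp
    have uq: "t1 = t2" if t1: "t1 \<in> uk \<xi> \<rightarrow>\<^sub>E W" "f \<in> cyl r R (Mrec \<xi> t1)"
      and t2: "t2 \<in> uk \<xi> \<rightarrow>\<^sub>E W" "f \<in> cyl r R (Mrec \<xi> t2)" for t1 t2
    proof -
      have l1: "nle (Mrec \<zeta> (restrict t1 (uk \<zeta>))) (Mrec \<xi> t1)" using P1[OF t1(1)] ismax_uk[OF z] by blast
      have l2: "nle (Mrec \<zeta> (restrict t2 (uk \<zeta>))) (Mrec \<xi> t2)" using P1[OF t2(1)] ismax_uk[OF z] by blast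
      have "f \<in> cyl r R (Mrec \<zeta> (restrict t1 (uk \<zeta>)))" using cyl_nle[OF l1] t1(2) by blast
      moreover have "f \<in> cyl r R (Mrec \<zeta> (restrict t2 (uk \<zeta>)))" using cyl_nle[OF l2] t2(2) by blast
      ultimately have eq0: "restrict t1 (uk \<zeta>) = restrict t2 (uk \<zeta>)"
        using IH2[OF f] rl[OF t1(1)] rl[OF t2(1)] by blast
      let ?m = "Mrec \<zeta> (restrict t1 (uk \<zeta>))"
      have m1: "?m \<in> nodes r R" using IH1[OF rl[OF t1(1)]] by blast
      have ib: "bij_betw (iota ?m (cK \<zeta>)) W (Parts ?m (cK \<zeta>))" using iota[OF m1 cz] .
      have pp1: "partprop r R ?m (cK \<zeta>) (Parts ?m (cK \<zeta>))" using Parts[OF m1 cz] .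
      have e1: "Mrec \<xi> t1 = iota ?m (cK \<zeta>) (t1 \<zeta>)" using Mrec_succ[OF z] .
      have e2: "Mrec \<xi> t2 = iota ?m (cK \<zeta>) (t2 \<zeta>)" using Mrec_succ[OF z, of t2] eq0 by simp
      have "t1 \<zeta> = t2 \<zeta>"
      proof (rule ccontr)
        assume ne: "t1 \<zeta> \<noteq> t2 \<zeta>"
        have "iota ?m (cK \<zeta>) (t1 \<zeta>) \<noteq> iota ?m (cK \<zeta>) (t2 \<zeta>)"
          using ib ne tz[OF t1(1)] tz[OF t2(1)] unfolding bij_betw_def inj_on_def by blast
        moreover have "iota ?m (cK \<zeta>) (t1 \<zeta>) \<in> Parts ?m (cK \<zeta>)" "iota ?m (cK \<zeta>) (t2 \<zeta>) \<in> Parts ?m (cK \<zeta>)"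
          using ib tz[OF t1(1)] tz[OF t2(1)] unfolding bij_betw_def by blast+
        ultimately have "cyl r R (iota ?m (cK \<zeta>) (t1 \<zeta>)) \<inter> cyl r R (iota ?m (cK \<zeta>) (t2 \<zeta>)) = {}"
          using partpropD(4)[OF pp1] by blast
        thus False using t1(2) t2(2) e1 e2 by auto
      qed
      show "t1 = t2"
      proof (rule PiE_ext[OF t1(1) t2(1)])
        fix y assume "y \<in> uk \<xi>"
        hence "y = \<zeta> \<or> y \<in> uk \<zeta>" using ukx by blast
        thus "t1 y = t2 y"
        proof
          assume "y \<in> uk \<zeta>"
          thus "t1 y = t2 y" using fun_cong[OF eq0, of y] by simp
        qed (use \<open>t1 \<zeta> = t2 \<zeta>\<close> in simp)
      qed
    qed
    show ?thesis using tl ex uq by blast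
  qed
  have A: "\<forall>t\<in>uk \<xi> \<rightarrow>\<^sub>E W. Mrec \<xi> t \<in> nodes r R \<and>
      (\<forall>\<zeta>'\<in>uk \<xi>. nle (Mrec \<zeta>' (restrict t (uk \<zeta>'))) (Mrec \<xi> t) \<and> cK \<zeta>' \<in> fst (Mrec \<xi> t))"
    by (intro ballI P1)
  have B: "\<forall>f\<in>bd_carrier r R. \<exists>!t. t \<in> uk \<xi> \<rightarrow>\<^sub>E W \<and> f \<in> cyl r R (Mrec \<xi> t)"
    by (intro ballI P2)
  show ?thesis unfolding INVP_def by (rule conjI[OF A B])
qed

lemma nodesI: "a \<in> Field r \<Longrightarrow> fst n = underS r a \<Longrightarrow> snd n \<in> fst n \<rightarrow>\<^sub>E R \<Longrightarrow> n \<in> nodes r R"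
  by (cases n) (auto simp: nodes_def)

lemma lim_step: assumes xi: "\<xi> \<in> Field kappa" and nm: "\<not> (\<exists>\<zeta>. ismax \<xi> \<zeta>)"
  and IH: "\<And>\<zeta>. \<zeta> \<in> uk \<xi> \<Longrightarrow> INVP \<zeta>"
  shows "INVP \<xi>"
proof -
  have IH1: "Mrec \<zeta> t \<in> nodes r R \<and> (\<forall>\<zeta>'\<in>uk \<zeta>. nle (Mrec \<zeta>' (restrict t (uk \<zeta>'))) (Mrec \<zeta> t) \<and> cK \<zeta>' \<in> fst (Mrec \<zeta> t))"
    if "\<zeta> \<in> uk \<xi>" "t \<in> uk \<zeta> \<rightarrow>\<^sub>E W" for \<zeta> t
  proof -
    have "INVP \<zeta>" using IH that(1) .
    thus ?thesis using that(2) unfolding INVP_def by simp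
  qed
  have IH2: "\<exists>!t. t \<in> uk \<zeta> \<rightarrow>\<^sub>E W \<and> f \<in> cyl r R (Mrec \<zeta> t)"
    if "\<zeta> \<in> uk \<xi>" "f \<in> bd_carrier r R" for \<zeta> f
  proof -
    have "INVP \<zeta>" using IH that(1) .
    thus ?thesis using that(2) unfolding INVP_def by simp
  qed
  have Mx: "\<And>t. Mrec \<xi> t = limnode (uk \<xi>) (\<lambda>\<zeta>. Mrec \<zeta> (restrict t (uk \<zeta>)))" using Mrec_lim[OF nm] .
  have ukF: "\<And>\<zeta>. \<zeta> \<in> uk \<xi> \<Longrightarrow> \<zeta> \<in> Field kappa" using bdsp.in_Field_underS[OF bdspK] .
  have chain: "nle (Mrec \<zeta>1 (restrict t (uk \<zeta>1))) (Mrec \<zeta>2 (restrict t (uk \<zeta>2)))"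
    if "t \<in> uk \<xi> \<rightarrow>\<^sub>E W" "\<zeta>2 \<in> uk \<xi>" "\<zeta>1 \<in> uk \<zeta>2" for t \<zeta>1 \<zeta>2
  proof -
    have "nle (Mrec \<zeta>1 (restrict (restrict t (uk \<zeta>2)) (uk \<zeta>1))) (Mrec \<zeta>2 (restrict t (uk \<zeta>2)))"
      using IH1[OF that(2) restrict_level[OF that(1,2)]] that(3) by blast
    thus ?thesis unfolding restrict_restrict_uk[OF that(3)] .
  qed
  have coh: "snd (Mrec \<zeta>1 (restrict t (uk \<zeta>1))) y = snd (Mrec \<zeta>2 (restrict t (uk \<zeta>2))) y"
    if t: "t \<in> uk \<xi> \<rightarrow>\<^sub>E W" and z: "\<zeta>1 \<in> uk \<xi>" "\<zeta>2 \<in> uk \<xi>"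
      and y: "y \<in> fst (Mrec \<zeta>1 (restrict t (uk \<zeta>1)))" "y \<in> fst (Mrec \<zeta>2 (restrict t (uk \<zeta>2)))" for t \<zeta>1 \<zeta>2 y
  proof -
    have "(\<zeta>1,\<zeta>2) \<in> kappa \<or> (\<zeta>2,\<zeta>1) \<in> kappa" using bdsp.TOT[OF bdspK ukF[OF z(1)] ukF[OF z(2)]] .
    hence "\<zeta>1 = \<zeta>2 \<or> \<zeta>1 \<in> uk \<zeta>2 \<or> \<zeta>2 \<in> uk \<zeta>1" unfolding underS_def by blast
    moreover
    { assume "\<zeta>1 \<in> uk \<zeta>2"
      hence "snd (Mrec \<zeta>2 (restrict t (uk \<zeta>2))) y = snd (Mrec \<zeta>1 (restrict t (uk \<zeta>1))) y"
        using chain[OF t z(2)] y(1) unfolding nle_def by blast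
      hence ?thesis by simp }
    moreover
    { assume "\<zeta>2 \<in> uk \<zeta>1"
      hence "snd (Mrec \<zeta>1 (restrict t (uk \<zeta>1))) y = snd (Mrec \<zeta>2 (restrict t (uk \<zeta>2))) y"
        using chain[OF t z(1)] y(2) unfolding nle_def by blast }
    ultimately show ?thesis by auto
  qed
  have P1: "Mrec \<xi> t \<in> nodes r R \<and>
      (\<forall>\<zeta>'\<in>uk \<xi>. nle (Mrec \<zeta>' (restrict t (uk \<zeta>'))) (Mrec \<xi> t) \<and> cK \<zeta>' \<in> fst (Mrec \<xi> t))"
    if t: "t \<in> uk \<xi> \<rightarrow>\<^sub>E W" for t
  proof -
    define N where "N \<zeta> = Mrec \<zeta> (restrict t (uk \<zeta>))" for \<zeta>
    have MN: "Mrec \<xi> t = limnode (uk \<xi>) N" unfolding N_def by (rule Mx)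
    have Nn: "N \<zeta> \<in> nodes r R" if "\<zeta> \<in> uk \<xi>" for \<zeta>
      unfolding N_def using IH1[OF that restrict_level[OF t that]] by blast
    have cohN: "snd (N i) y = snd (N j) y" if "i \<in> uk \<xi>" "j \<in> uk \<xi>" "y \<in> fst (N i)" "y \<in> fst (N j)" for i j y
      using coh[OF t that(1,2)] that(3,4) unfolding N_def by blast
    have le: "nle (N \<zeta>) (Mrec \<xi> t)" if "\<zeta> \<in> uk \<xi>" for \<zeta>
      unfolding MN by (rule limnode_le[OF cohN that]) auto
    have PiE: "snd (Mrec \<xi> t) \<in> fst (Mrec \<xi> t) \<rightarrow>\<^sub>E R"
      unfolding MN by (rule limnode_PiE) (use Nn nodesD in blast)
    have fstM: "fst (Mrec \<xi> t) = (\<Union>\<zeta>\<in>uk \<xi>. fst (N \<zeta>))" unfolding MN limnode_def by simp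
    have aex: "\<exists>a. a \<in> Field r \<and> fst (N \<zeta>) = underS r a" if "\<zeta> \<in> uk \<xi>" for \<zeta>
      using nodesD[OF Nn[OF that]] by blast
    define a where "a \<zeta> = (SOME a. a \<in> Field r \<and> fst (N \<zeta>) = underS r a)" for \<zeta>
    have a: "a \<zeta> \<in> Field r \<and> fst (N \<zeta>) = underS r (a \<zeta>)" if "\<zeta> \<in> uk \<xi>" for \<zeta>
      unfolding a_def by (rule someI_ex[OF aex[OF that]])
    have ofl: "wo_rel.ofilter r (fst (Mrec \<xi> t))"
      unfolding fstM
    proof (rule wo_rel.ofilter_UNION[OF wo])
      fix \<zeta> assume "\<zeta> \<in> uk \<xi>"
      thus "wo_rel.ofilter r (fst (N \<zeta>))" using a wo_rel.underS_ofilter[OF wo] by simp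
    qed
    have proper: "fst (Mrec \<xi> t) \<noteq> Field r"
    proof
      assume eq: "fst (Mrec \<xi> t) = Field r"
      let ?A = "a ` uk \<xi>"
      have AF: "?A \<subseteq> Field r" using a by blast
      have cof: "cofinal ?A r" unfolding cofinal_def
      proof
        fix y assume "y \<in> Field r"
        hence "y \<in> fst (Mrec \<xi> t)" using eq by simp
        then obtain \<zeta> where z: "\<zeta> \<in> uk \<xi>" "y \<in> fst (N \<zeta>)" unfolding fstM by blast
        hence "y \<in> underS r (a \<zeta>)" using a by blast
        hence "y \<noteq> a \<zeta> \<and> (y, a \<zeta>) \<in> r" unfolding underS_def by simp
        thus "\<exists>b\<in>?A. y \<noteq> b \<and> (y,b) \<in> r" using z(1) by blast
      qed
      have c1: "kappa \<le>o |?A|" using CF AF cof unfolding cf_eq_def by blast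
      have c2: "|?A| \<le>o |uk \<xi>|" by (rule card_of_image)
      have c3: "|uk \<xi>| <o kappa" using card_of_underS[OF COk xi] .
      have "kappa <o kappa" using ordLeq_ordLess_trans[OF ordLeq_transitive[OF c1 c2] c3] .
      thus False using ordLess_irreflexive by blast
    qed
    obtain b where b: "b \<in> Field r" "fst (Mrec \<xi> t) = underS r b"
      using ofl proper wo_rel.ofilter_underS_Field[OF wo] by blast
    have node: "Mrec \<xi> t \<in> nodes r R" using nodesI[OF b PiE] .
    have "nle (Mrec \<zeta>' (restrict t (uk \<zeta>'))) (Mrec \<xi> t) \<and> cK \<zeta>' \<in> fst (Mrec \<xi> t)" if z': "\<zeta>' \<in> uk \<xi>" for \<zeta>'
    proof -
      have A: "nle (Mrec \<zeta>' (restrict t (uk \<zeta>'))) (Mrec \<xi> t)" using le[OF z'] unfolding N_def .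
      obtain \<zeta>2 where z2: "\<zeta>2 \<in> uk \<xi>" "\<zeta>' \<in> uk \<zeta>2" using uk_lim[OF nm z'] by blast
      have "cK \<zeta>' \<in> fst (N \<zeta>2)" using IH1[OF z2(1) restrict_level[OF t z2(1)]] z2(2) unfolding N_def by blast
      moreover have "fst (N \<zeta>2) \<subseteq> fst (Mrec \<xi> t)" using le[OF z2(1)] unfolding nle_def by blast
      ultimately show ?thesis using A by blast
    qed
    thus ?thesis using node by blast
  qed
  have P2: "\<exists>!t. t \<in> uk \<xi> \<rightarrow>\<^sub>E W \<and> f \<in> cyl r R (Mrec \<xi> t)" if f: "f \<in> bd_carrier r R" for f
  proof -
    define T where "T \<zeta> = (THE t. t \<in> uk \<zeta> \<rightarrow>\<^sub>E W \<and> f \<in> cyl r R (Mrec \<zeta> t))" for \<zeta>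
    have T: "T \<zeta> \<in> uk \<zeta> \<rightarrow>\<^sub>E W \<and> f \<in> cyl r R (Mrec \<zeta> (T \<zeta>))" if "\<zeta> \<in> uk \<xi>" for \<zeta>
      unfolding T_def by (rule theI'[OF IH2[OF that f]])
    have Tuniq: "t' = T \<zeta>" if "\<zeta> \<in> uk \<xi>" "t' \<in> uk \<zeta> \<rightarrow>\<^sub>E W" "f \<in> cyl r R (Mrec \<zeta> t')" for \<zeta> t'
    proof -
      have u: "\<exists>!t. t \<in> uk \<zeta> \<rightarrow>\<^sub>E W \<and> f \<in> cyl r R (Mrec \<zeta> t)" using IH2[OF that(1) f] .
      show ?thesis using u T[OF that(1)] that(2,3) by blast
    qed
    have Tcoh: "restrict (T \<zeta>2) (uk \<zeta>1) = T \<zeta>1" if "\<zeta>2 \<in> uk \<xi>" "\<zeta>1 \<in> uk \<zeta>2" for \<zeta>1 \<zeta>2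
    proof -
      have z1: "\<zeta>1 \<in> uk \<xi>" using bdsp.underS_trans2[OF bdspK that(2,1)] .
      have T2: "T \<zeta>2 \<in> uk \<zeta>2 \<rightarrow>\<^sub>E W" "f \<in> cyl r R (Mrec \<zeta>2 (T \<zeta>2))" using T[OF that(1)] by blast+
      have "nle (Mrec \<zeta>1 (restrict (T \<zeta>2) (uk \<zeta>1))) (Mrec \<zeta>2 (T \<zeta>2))"
        using IH1[OF that(1) T2(1)] that(2) by blast
      hence "f \<in> cyl r R (Mrec \<zeta>1 (restrict (T \<zeta>2) (uk \<zeta>1)))" using cyl_nle T2(2) by blast
      moreover have "restrict (T \<zeta>2) (uk \<zeta>1) \<in> uk \<zeta>1 \<rightarrow>\<^sub>E W" using restrict_level[OF T2(1) that(2)] .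
      ultimately show ?thesis using Tuniq[OF z1] by blast
    qed
    define sel where "sel y = (SOME \<zeta>. \<zeta> \<in> uk \<xi> \<and> y \<in> uk \<zeta>)" for y
    have sel: "sel y \<in> uk \<xi> \<and> y \<in> uk (sel y)" if "y \<in> uk \<xi>" for y
    proof -
      have "\<exists>\<zeta>. \<zeta> \<in> uk \<xi> \<and> y \<in> uk \<zeta>" using uk_lim[OF nm that] by blast
      thus ?thesis unfolding sel_def by (rule someI_ex)
    qed
    define t where "t y = (if y \<in> uk \<xi> then T (sel y) y else undefined)" for y
    have tval: "t y = T \<zeta> y" if z: "\<zeta> \<in> uk \<xi>" and y: "y \<in> uk \<zeta>" for \<zeta> y
    proof -
      have yx: "y \<in> uk \<xi>" using bdsp.underS_trans2[OF bdspK y z] .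
      have s: "sel y \<in> uk \<xi>" "y \<in> uk (sel y)" using sel[OF yx] by blast+
      have tv: "t y = T (sel y) y" unfolding t_def using yx by simp
      have "(\<zeta>, sel y) \<in> kappa \<or> (sel y, \<zeta>) \<in> kappa" using bdsp.TOT[OF bdspK ukF[OF z] ukF[OF s(1)]] .
      hence "\<zeta> = sel y \<or> \<zeta> \<in> uk (sel y) \<or> sel y \<in> uk \<zeta>" unfolding underS_def by blast
      moreover
      { assume h: "\<zeta> \<in> uk (sel y)"
        have "restrict (T (sel y)) (uk \<zeta>) y = T \<zeta> y" using Tcoh[OF s(1) h] by simp
        hence "T (sel y) y = T \<zeta> y" using y by simp }
      moreover
      { assume h: "sel y \<in> uk \<zeta>"
        have "restrict (T \<zeta>) (uk (sel y)) y = T (sel y) y" using Tcoh[OF z h] by simp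
        hence "T (sel y) y = T \<zeta> y" using s(2) by simp }
      ultimately show ?thesis using tv by auto
    qed
    have tl: "t \<in> uk \<xi> \<rightarrow>\<^sub>E W"
    proof
      fix y assume y: "y \<in> uk \<xi>"
      have "t y = T (sel y) y" using tval sel[OF y] by blast
      moreover have "T (sel y) \<in> uk (sel y) \<rightarrow>\<^sub>E W" using T sel[OF y] by blast
      ultimately show "t y \<in> W" using sel[OF y] by auto
    next
      fix y assume "y \<notin> uk \<xi>"
      thus "t y = undefined" unfolding t_def by simp
    qed
    have tr: "restrict t (uk \<zeta>) = T \<zeta>" if z: "\<zeta> \<in> uk \<xi>" for \<zeta>
    proof
      fix y
      show "restrict t (uk \<zeta>) y = T \<zeta> y"
      proof (cases "y \<in> uk \<zeta>")
        case True thus ?thesis using tval[OF z True] by simp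
      next
        case False
        have "T \<zeta> \<in> uk \<zeta> \<rightarrow>\<^sub>E W" using T[OF z] by blast
        hence "T \<zeta> y = undefined" using False by (simp add: PiE_def extensional_def)
        thus ?thesis using False by simp
      qed
    qed
    have ex: "f \<in> cyl r R (Mrec \<xi> t)"
      unfolding Mx
    proof (rule limnode_cyl[OF f])
      fix \<zeta> assume z: "\<zeta> \<in> uk \<xi>"
      show "f \<in> cyl r R (Mrec \<zeta> (restrict t (uk \<zeta>)))" using T[OF z] tr[OF z] by simp
    qed
    have uq: "t1 = t2" if t1: "t1 \<in> uk \<xi> \<rightarrow>\<^sub>E W" "f \<in> cyl r R (Mrec \<xi> t1)"
      and t2: "t2 \<in> uk \<xi> \<rightarrow>\<^sub>E W" "f \<in> cyl r R (Mrec \<xi> t2)" for t1 t2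
    proof -
      have rk: "restrict tk (uk \<zeta>) = T \<zeta>" if "tk \<in> uk \<xi> \<rightarrow>\<^sub>E W" "f \<in> cyl r R (Mrec \<xi> tk)" "\<zeta> \<in> uk \<xi>" for tk \<zeta>
      proof -
        have "nle (Mrec \<zeta> (restrict tk (uk \<zeta>))) (Mrec \<xi> tk)" using P1[OF that(1)] that(3) by blast
        hence "f \<in> cyl r R (Mrec \<zeta> (restrict tk (uk \<zeta>)))" using cyl_nle that(2) by blast
        thus ?thesis using Tuniq[OF that(3) restrict_level[OF that(1,3)]] by blast
      qed
      show ?thesis
      proof (rule PiE_ext[OF t1(1) t2(1)])
        fix y assume y: "y \<in> uk \<xi>"
        have s: "sel y \<in> uk \<xi>" "y \<in> uk (sel y)" using sel[OF y] by blast+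
        have "restrict t1 (uk (sel y)) y = restrict t2 (uk (sel y)) y"
          using rk[OF t1 s(1)] rk[OF t2 s(1)] by simp
        thus "t1 y = t2 y" using s(2) by simp
      qed
    qed
    show ?thesis using tl ex uq by blast
  qed
  have A: "\<forall>t\<in>uk \<xi> \<rightarrow>\<^sub>E W. Mrec \<xi> t \<in> nodes r R \<and>
      (\<forall>\<zeta>'\<in>uk \<xi>. nle (Mrec \<zeta>' (restrict t (uk \<zeta>'))) (Mrec \<xi> t) \<and> cK \<zeta>' \<in> fst (Mrec \<xi> t))"
    by (intro ballI P1)
  have B: "\<forall>f\<in>bd_carrier r R. \<exists>!t. t \<in> uk \<xi> \<rightarrow>\<^sub>E W \<and> f \<in> cyl r R (Mrec \<xi> t)"
    by (intro ballI P2)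
  show ?thesis unfolding INVP_def by (rule conjI[OF A B])
qed

lemma INV_aux: "\<xi> \<in> Field kappa \<longrightarrow> INVP \<xi>"
proof (rule wo_rel.well_order_induct[OF woK])
  fix x assume IH: "\<forall>y. y \<noteq> x \<and> (y, x) \<in> kappa \<longrightarrow> (y \<in> Field kappa \<longrightarrow> INVP y)"
  show "x \<in> Field kappa \<longrightarrow> INVP x"
  proof
    assume x: "x \<in> Field kappa"
    have IH': "INVP \<zeta>" if "\<zeta> \<in> uk x" for \<zeta>
    proof -
      have "\<zeta> \<noteq> x \<and> (\<zeta>, x) \<in> kappa" using that unfolding underS_def by simp
      moreover have "\<zeta> \<in> Field kappa" using bdsp.in_Field_underS[OF bdspK that] .
      ultimately show ?thesis using IH by blast
    qed
    show "INVP x"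
    proof (cases "\<exists>\<zeta>. ismax x \<zeta>")
      case True
      then obtain \<zeta> where z: "ismax x \<zeta>" by blast
      show ?thesis using succ_step[OF x z IH'[OF ismax_uk[OF z]]] .
    next
      case False
      show ?thesis using lim_step[OF x False IH'] .
    qed
  qed
qed

lemma INV: "\<xi> \<in> Field kappa \<Longrightarrow> INVP \<xi>" using INV_aux by blast

end

context bdsp3 begin

definition Fm where "Fm g = snd (limnode (Field kappa) (\<lambda>\<xi>. Mrec \<xi> (restrict g (uk \<xi>))))"

abbreviation TC where "TC \<equiv> bd_carrier kappa W"

lemma ukF': "\<zeta> \<in> uk \<xi> \<Longrightarrow> \<zeta> \<in> Field kappa" using bdsp.in_Field_underS[OF bdspK] .

lemma gl: "g \<in> TC \<Longrightarrow> restrict g (uk \<xi>) \<in> uk \<xi> \<rightarrow>\<^sub>E W"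
  unfolding bd_carrier_def using ukF' by (auto simp: PiE_iff)

lemma INV1: assumes "\<xi> \<in> Field kappa" "t \<in> uk \<xi> \<rightarrow>\<^sub>E W" shows "Mrec \<xi> t \<in> nodes r R \<and>
      (\<forall>\<zeta>\<in>uk \<xi>. nle (Mrec \<zeta> (restrict t (uk \<zeta>))) (Mrec \<xi> t) \<and> cK \<zeta> \<in> fst (Mrec \<xi> t))"
proof -
  have "INVP \<xi>" by (rule INV[OF assms(1)])
  thus ?thesis using assms(2) unfolding INVP_def by simp
qed

lemma INV2: assumes "\<xi> \<in> Field kappa" "f \<in> bd_carrier r R" shows "\<exists>!t. t \<in> uk \<xi> \<rightarrow>\<^sub>E W \<and> f \<in> cyl r R (Mrec \<xi> t)"
proof -
  have "INVP \<xi>" by (rule INV[OF assms(1)])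
  thus ?thesis using assms(2) unfolding INVP_def by simp
qed

lemma chainF: assumes g: "g \<in> TC" and xi: "\<xi> \<in> Field kappa" and z: "\<zeta> \<in> uk \<xi>"
  shows "nle (Mrec \<zeta> (restrict g (uk \<zeta>))) (Mrec \<xi> (restrict g (uk \<xi>)))"
proof -
  have "nle (Mrec \<zeta> (restrict (restrict g (uk \<xi>)) (uk \<zeta>))) (Mrec \<xi> (restrict g (uk \<xi>)))"
    using INV1[OF xi gl[OF g]] z by blast
  thus ?thesis unfolding restrict_restrict_uk[OF z] .
qed

lemma cohF: assumes g: "g \<in> TC" and i: "i \<in> Field kappa" and j: "j \<in> Field kappa"
  and y: "y \<in> fst (Mrec i (restrict g (uk i)))" "y \<in> fst (Mrec j (restrict g (uk j)))"
  shows "snd (Mrec i (restrict g (uk i))) y = snd (Mrec j (restrict g (uk j))) y"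
proof -
  have "(i,j) \<in> kappa \<or> (j,i) \<in> kappa" using bdsp.TOT[OF bdspK i j] .
  hence "i = j \<or> i \<in> uk j \<or> j \<in> uk i" unfolding underS_def by blast
  moreover
  { assume "i \<in> uk j"
    hence "snd (Mrec j (restrict g (uk j))) y = snd (Mrec i (restrict g (uk i))) y"
      using chainF[OF g j] y(1) unfolding nle_def by blast
    hence ?thesis by simp }
  moreover
  { assume "j \<in> uk i"
    hence ?thesis using chainF[OF g i] y(2) unfolding nle_def by blast }
  ultimately show ?thesis by auto
qed

lemma coverF: assumes g: "g \<in> TC" and y: "y \<in> Field r"
  shows "\<exists>\<xi>\<in>Field kappa. y \<in> fst (Mrec \<xi> (restrict g (uk \<xi>)))"
proof -
  obtain \<zeta> where z: "\<zeta> \<in> Field kappa" "y \<in> underS r (cK \<zeta>)" using cK y by blast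
  obtain \<xi> where xi: "\<xi> \<in> Field kappa" "\<zeta> \<in> uk \<xi>" using bdsp.Field_lim[OF bdspK z(1)] by blast
  have I: "Mrec \<xi> (restrict g (uk \<xi>)) \<in> nodes r R" "cK \<zeta> \<in> fst (Mrec \<xi> (restrict g (uk \<xi>)))"
    using INV1[OF xi(1) gl[OF g]] xi(2) by blast+
  obtain a where a: "a \<in> Field r" "fst (Mrec \<xi> (restrict g (uk \<xi>))) = underS r a" using nodesD[OF I(1)] by blast
  have "y \<in> underS r a" using underS_trans2[OF z(2)] I(2) a(2) by simp
  thus ?thesis using xi(1) a(2) by auto
qed

lemma limF: assumes g: "g \<in> TC"
  shows "fst (limnode (Field kappa) (\<lambda>\<xi>. Mrec \<xi> (restrict g (uk \<xi>)))) = Field r"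
proof
  show "fst (limnode (Field kappa) (\<lambda>\<xi>. Mrec \<xi> (restrict g (uk \<xi>)))) \<subseteq> Field r"
  proof
    fix y assume "y \<in> fst (limnode (Field kappa) (\<lambda>\<xi>. Mrec \<xi> (restrict g (uk \<xi>))))"
    then obtain \<xi> where xi: "\<xi> \<in> Field kappa" "y \<in> fst (Mrec \<xi> (restrict g (uk \<xi>)))"
      unfolding limnode_def by auto
    obtain a where "a \<in> Field r" "fst (Mrec \<xi> (restrict g (uk \<xi>))) = underS r a"
      using nodesD INV1[OF xi(1) gl[OF g]] by blast
    thus "y \<in> Field r" using xi(2) underS_sub by blast
  qed
  show "Field r \<subseteq> fst (limnode (Field kappa) (\<lambda>\<xi>. Mrec \<xi> (restrict g (uk \<xi>))))"
    using coverF[OF g] unfolding limnode_def by auto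
qed

lemma Fm_carrier: assumes g: "g \<in> TC" shows "Fm g \<in> bd_carrier r R"
proof -
  have "snd (limnode (Field kappa) (\<lambda>\<xi>. Mrec \<xi> (restrict g (uk \<xi>)))) \<in>
     fst (limnode (Field kappa) (\<lambda>\<xi>. Mrec \<xi> (restrict g (uk \<xi>)))) \<rightarrow>\<^sub>E R"
  proof (rule limnode_PiE)
    fix i assume "i \<in> Field kappa"
    thus "snd (Mrec i (restrict g (uk i))) \<in> fst (Mrec i (restrict g (uk i))) \<rightarrow>\<^sub>E R"
      using nodesD INV1[OF _ gl[OF g]] by blast
  qed
  thus ?thesis unfolding Fm_def bd_carrier_def limF[OF g] .
qed

lemma Fm_cyl: assumes g: "g \<in> TC" and xi: "\<xi> \<in> Field kappa"
  shows "Fm g \<in> cyl r R (Mrec \<xi> (restrict g (uk \<xi>)))"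
proof -
  have "nle (Mrec \<xi> (restrict g (uk \<xi>))) (limnode (Field kappa) (\<lambda>\<xi>. Mrec \<xi> (restrict g (uk \<xi>))))"
    by (rule limnode_le[OF _ xi]) (rule cohF[OF g], auto)
  thus ?thesis using Fm_carrier[OF g] unfolding nle_def cyl_def Fm_def by auto
qed

lemma Fm_key: assumes g: "g \<in> TC" and xi: "\<xi> \<in> Field kappa" and t: "t \<in> uk \<xi> \<rightarrow>\<^sub>E W"
  and f: "Fm g \<in> cyl r R (Mrec \<xi> t)" shows "restrict g (uk \<xi>) = t"
  using INV2[OF xi Fm_carrier[OF g]] Fm_cyl[OF g xi] gl[OF g] t f by blast

lemma Fm_inj: "inj_on Fm TC"
proof (rule inj_onI)
  fix g1 g2 assume g1: "g1 \<in> TC" and g2: "g2 \<in> TC" and eq: "Fm g1 = Fm g2"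
  show "g1 = g2"
  proof (rule PiE_ext)
    show "g1 \<in> Field kappa \<rightarrow>\<^sub>E W" "g2 \<in> Field kappa \<rightarrow>\<^sub>E W" using g1 g2 unfolding bd_carrier_def by auto
    fix y assume y: "y \<in> Field kappa"
    obtain \<xi> where xi: "\<xi> \<in> Field kappa" "y \<in> uk \<xi>" using bdsp.Field_lim[OF bdspK y] by blast
    have "Fm g1 \<in> cyl r R (Mrec \<xi> (restrict g2 (uk \<xi>)))" using Fm_cyl[OF g2 xi(1)] eq by simp
    hence "restrict g1 (uk \<xi>) = restrict g2 (uk \<xi>)" using Fm_key[OF g1 xi(1) gl[OF g2]] by blast
    hence "restrict g1 (uk \<xi>) y = restrict g2 (uk \<xi>) y" by simp
    thus "g1 y = g2 y" using xi(2) by simp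
  qed
qed

lemma agreeF: assumes g: "g \<in> TC" and f1: "f1 \<in> bd_carrier r R" and f2: "f2 \<in> bd_carrier r R"
  and c: "\<And>\<xi>. \<xi> \<in> Field kappa \<Longrightarrow> f1 \<in> cyl r R (Mrec \<xi> (restrict g (uk \<xi>))) \<and> f2 \<in> cyl r R (Mrec \<xi> (restrict g (uk \<xi>)))"
  shows "f1 = f2"
proof (rule PiE_ext)
  show "f1 \<in> Field r \<rightarrow>\<^sub>E R" "f2 \<in> Field r \<rightarrow>\<^sub>E R" using f1 f2 unfolding bd_carrier_def by auto
  fix y assume y: "y \<in> Field r"
  obtain \<xi> where xi: "\<xi> \<in> Field kappa" "y \<in> fst (Mrec \<xi> (restrict g (uk \<xi>)))" using coverF[OF g y] by blast
  show "f1 y = f2 y" using c[OF xi(1)] xi(2) unfolding cyl_def by auto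
qed

lemma Fm_surj: assumes f: "f \<in> bd_carrier r R" shows "\<exists>g\<in>TC. Fm g = f"
proof -
  define T where "T \<xi> = (THE t. t \<in> uk \<xi> \<rightarrow>\<^sub>E W \<and> f \<in> cyl r R (Mrec \<xi> t))" for \<xi>
  have T: "T \<xi> \<in> uk \<xi> \<rightarrow>\<^sub>E W \<and> f \<in> cyl r R (Mrec \<xi> (T \<xi>))" if "\<xi> \<in> Field kappa" for \<xi>
    unfolding T_def by (rule theI'[OF INV2[OF that f]])
  have Tuniq: "t' = T \<xi>" if "\<xi> \<in> Field kappa" "t' \<in> uk \<xi> \<rightarrow>\<^sub>E W" "f \<in> cyl r R (Mrec \<xi> t')" for \<xi> t'
  proof -
    have u: "\<exists>!t. t \<in> uk \<xi> \<rightarrow>\<^sub>E W \<and> f \<in> cyl r R (Mrec \<xi> t)" using INV2[OF that(1) f] .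
    show ?thesis using u T[OF that(1)] that(2,3) by blast
  qed
  have Tcoh: "restrict (T \<xi>) (uk \<zeta>) = T \<zeta>" if "\<xi> \<in> Field kappa" "\<zeta> \<in> uk \<xi>" for \<xi> \<zeta>
  proof -
    have zF: "\<zeta> \<in> Field kappa" using ukF' that(2) .
    have T2: "T \<xi> \<in> uk \<xi> \<rightarrow>\<^sub>E W" "f \<in> cyl r R (Mrec \<xi> (T \<xi>))" using T[OF that(1)] by blast+
    have "nle (Mrec \<zeta> (restrict (T \<xi>) (uk \<zeta>))) (Mrec \<xi> (T \<xi>))"
      using INV1[OF that(1) T2(1)] that(2) by blast
    hence "f \<in> cyl r R (Mrec \<zeta> (restrict (T \<xi>) (uk \<zeta>)))" using cyl_nle T2(2) by blast
    moreover have "restrict (T \<xi>) (uk \<zeta>) \<in> uk \<zeta> \<rightarrow>\<^sub>E W" using restrict_level[OF T2(1) that(2)] .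
    ultimately show ?thesis using Tuniq[OF zF] by blast
  qed
  define sel where "sel y = (SOME \<xi>. \<xi> \<in> Field kappa \<and> y \<in> uk \<xi>)" for y
  have sel: "sel y \<in> Field kappa \<and> y \<in> uk (sel y)" if "y \<in> Field kappa" for y
  proof -
    have "\<exists>\<xi>. \<xi> \<in> Field kappa \<and> y \<in> uk \<xi>" using bdsp.Field_lim[OF bdspK that] by blast
    thus ?thesis unfolding sel_def by (rule someI_ex)
  qed
  define g where "g y = (if y \<in> Field kappa then T (sel y) y else undefined)" for y
  have gval: "g y = T \<xi> y" if xi: "\<xi> \<in> Field kappa" and y: "y \<in> uk \<xi>" for \<xi> y
  proof -
    have yF: "y \<in> Field kappa" using ukF' y .
    have s: "sel y \<in> Field kappa" "y \<in> uk (sel y)" using sel[OF yF] by blast+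
    have gv: "g y = T (sel y) y" unfolding g_def using yF by simp
    have "(\<xi>, sel y) \<in> kappa \<or> (sel y, \<xi>) \<in> kappa" using bdsp.TOT[OF bdspK xi s(1)] .
    hence "\<xi> = sel y \<or> \<xi> \<in> uk (sel y) \<or> sel y \<in> uk \<xi>" unfolding underS_def by blast
    moreover
    { assume h: "\<xi> \<in> uk (sel y)"
      have "restrict (T (sel y)) (uk \<xi>) y = T \<xi> y" using Tcoh[OF s(1) h] by simp
      hence "T (sel y) y = T \<xi> y" using y by simp }
    moreover
    { assume h: "sel y \<in> uk \<xi>"
      have "restrict (T \<xi>) (uk (sel y)) y = T (sel y) y" using Tcoh[OF xi h] by simp
      hence "T (sel y) y = T \<xi> y" using s(2) by simp }
    ultimately show ?thesis using gv by auto
  qed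
  have gT: "g \<in> TC" unfolding bd_carrier_def
  proof
    fix y assume y: "y \<in> Field kappa"
    have "g y = T (sel y) y" using gval sel[OF y] by blast
    moreover have "T (sel y) \<in> uk (sel y) \<rightarrow>\<^sub>E W" using T sel[OF y] by blast
    ultimately show "g y \<in> W" using sel[OF y] by auto
  next
    fix y assume "y \<notin> Field kappa"
    thus "g y = undefined" unfolding g_def by simp
  qed
  have gr: "restrict g (uk \<xi>) = T \<xi>" if xi: "\<xi> \<in> Field kappa" for \<xi>
  proof
    fix y
    show "restrict g (uk \<xi>) y = T \<xi> y"
    proof (cases "y \<in> uk \<xi>")
      case True thus ?thesis using gval[OF xi True] by simp
    next
      case False
      have "T \<xi> \<in> uk \<xi> \<rightarrow>\<^sub>E W" using T[OF xi] by blast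
      hence "T \<xi> y = undefined" using False by (simp add: PiE_def extensional_def)
      thus ?thesis using False by simp
    qed
  qed
  have "Fm g = f"
  proof (rule agreeF[OF gT Fm_carrier[OF gT] f])
    fix \<xi> assume xi: "\<xi> \<in> Field kappa"
    show "Fm g \<in> cyl r R (Mrec \<xi> (restrict g (uk \<xi>))) \<and> f \<in> cyl r R (Mrec \<xi> (restrict g (uk \<xi>)))"
      using Fm_cyl[OF gT xi] T[OF xi] gr[OF xi] by simp
  qed
  thus ?thesis using gT by blast
qed

lemma tcyl_eq: assumes "\<xi> \<in> Field kappa" "t \<in> uk \<xi> \<rightarrow>\<^sub>E W" "g \<in> TC"
  shows "g \<in> cyl kappa W (uk \<xi>, t) \<longleftrightarrow> restrict g (uk \<xi>) = t"
proof
  assume "g \<in> cyl kappa W (uk \<xi>, t)"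
  hence "\<forall>x\<in>uk \<xi>. g x = t x" unfolding cyl_def by simp
  thus "restrict g (uk \<xi>) = t" using assms(2) by (auto simp: fun_eq_iff PiE_def extensional_def)
next
  assume "restrict g (uk \<xi>) = t"
  hence "\<forall>x\<in>uk \<xi>. g x = t x" by auto
  thus "g \<in> cyl kappa W (uk \<xi>, t)" using assms(3) unfolding cyl_def by simp
qed

lemma Fm_image: assumes xi: "\<xi> \<in> Field kappa" and t: "t \<in> uk \<xi> \<rightarrow>\<^sub>E W"
  shows "Fm ` cyl kappa W (uk \<xi>, t) = cyl r R (Mrec \<xi> t)"
proof
  show "Fm ` cyl kappa W (uk \<xi>, t) \<subseteq> cyl r R (Mrec \<xi> t)"
  proof
    fix f assume "f \<in> Fm ` cyl kappa W (uk \<xi>, t)"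
    then obtain g where g: "g \<in> cyl kappa W (uk \<xi>, t)" "f = Fm g" by blast
    have gT: "g \<in> TC" using g(1) cyl_carrier by (simp add: cyl_def)
    have "restrict g (uk \<xi>) = t" using tcyl_eq[OF xi t gT] g(1) by blast
    thus "f \<in> cyl r R (Mrec \<xi> t)" using Fm_cyl[OF gT xi] g(2) by simp
  qed
  show "cyl r R (Mrec \<xi> t) \<subseteq> Fm ` cyl kappa W (uk \<xi>, t)"
  proof
    fix f assume f: "f \<in> cyl r R (Mrec \<xi> t)"
    obtain g where g: "g \<in> TC" "Fm g = f" using Fm_surj cyl_carrier[OF f] by blast
    have "restrict g (uk \<xi>) = t" using Fm_key[OF g(1) xi t] f g(2) by simp
    hence "g \<in> cyl kappa W (uk \<xi>, t)" using tcyl_eq[OF xi t g(1)] by blast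
    thus "f \<in> Fm ` cyl kappa W (uk \<xi>, t)" using g(2) by blast
  qed
qed

lemma homeo: "bd_space kappa W homeomorphic_space bd_space r R"
proof -
  have tsT: "topspace (bd_space kappa W) = TC" using bdsp.topspaceX[OF bdspK] .
  have tsX: "topspace (bd_space r R) = bd_carrier r R" using topspaceX .
  have cont: "continuous_map (bd_space kappa W) (bd_space r R) Fm"
    unfolding continuous_map_def
  proof (intro conjI allI impI)
    show "Fm \<in> topspace (bd_space kappa W) \<rightarrow> topspace (bd_space r R)" using Fm_carrier tsT tsX by auto
  next
    fix U assume U: "openin (bd_space r R) U"
    show "openin (bd_space kappa W) {x \<in> topspace (bd_space kappa W). Fm x \<in> U}"
    proof (subst openin_subopen, intro ballI)
      fix g assume "g \<in> {x \<in> topspace (bd_space kappa W). Fm x \<in> U}"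
      hence g: "g \<in> TC" "Fm g \<in> U" using tsT by auto
      obtain m where m: "m \<in> nodes r R" "Fm g \<in> cyl r R m" "cyl r R m \<subseteq> U" using open_nbhd[OF U g(2)] by blast
      obtain a where a: "a \<in> Field r" "fst m = underS r a" using nodesD[OF m(1)] by blast
      obtain \<xi> where xi: "\<xi> \<in> Field kappa" "a \<in> fst (Mrec \<xi> (restrict g (uk \<xi>)))" using coverF[OF g(1) a(1)] by blast
      let ?n = "Mrec \<xi> (restrict g (uk \<xi>))"
      have nN: "?n \<in> nodes r R" using INV1[OF xi(1) gl[OF g(1)]] by blast
      obtain b where b: "b \<in> Field r" "fst ?n = underS r b" using nodesD[OF nN] by blast
      have sub: "fst m \<subseteq> fst ?n" using a(2) b(2) xi(2) underS_mono by simp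
      have cs: "cyl r R ?n \<subseteq> cyl r R m"
      proof
        fix f' assume f': "f' \<in> cyl r R ?n"
        have "\<forall>y\<in>fst m. f' y = Fm g y" using f' Fm_cyl[OF g(1) xi(1)] sub unfolding cyl_def by auto
        thus "f' \<in> cyl r R m" using f' m(2) unfolding cyl_def by auto
      qed
      let ?V = "cyl kappa W (uk \<xi>, restrict g (uk \<xi>))"
      have tn: "(uk \<xi>, restrict g (uk \<xi>)) \<in> nodes kappa W" unfolding nodes_def using xi(1) gl[OF g(1)] by blast
      have "openin (bd_space kappa W) ?V" using bdsp.open_cyl[OF bdspK tn] .
      moreover have "g \<in> ?V" using tcyl_eq[OF xi(1) gl[OF g(1)] g(1)] by simp
      moreover have "?V \<subseteq> {x \<in> topspace (bd_space kappa W). Fm x \<in> U}"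
      proof
        fix g' assume g': "g' \<in> ?V"
        have "Fm g' \<in> cyl r R ?n" using Fm_image[OF xi(1) gl[OF g(1)]] g' by blast
        hence "Fm g' \<in> U" using cs m(3) by blast
        moreover have "g' \<in> TC" using g' unfolding cyl_def by simp
        ultimately show "g' \<in> {x \<in> topspace (bd_space kappa W). Fm x \<in> U}" using tsT by simp
      qed
      ultimately show "\<exists>T. openin (bd_space kappa W) T \<and> g \<in> T \<and> T \<subseteq> {x \<in> topspace (bd_space kappa W). Fm x \<in> U}"
        by blast
    qed
  qed
  have opn: "open_map (bd_space kappa W) (bd_space r R) Fm"
    unfolding open_map_def
  proof (intro allI impI)
    fix U assume U: "openin (bd_space kappa W) U"
    show "openin (bd_space r R) (Fm ` U)"
    proof (subst openin_subopen, intro ballI)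
      fix f assume "f \<in> Fm ` U"
      then obtain g where g: "g \<in> U" "f = Fm g" by blast
      obtain tn where tn: "tn \<in> nodes kappa W" "g \<in> cyl kappa W tn" "cyl kappa W tn \<subseteq> U"
        using bdsp.open_nbhd[OF bdspK U g(1)] by blast
      obtain \<xi> t where xt: "\<xi> \<in> Field kappa" "tn = (uk \<xi>, t)" "t \<in> uk \<xi> \<rightarrow>\<^sub>E W" using tn(1) unfolding nodes_def by blast
      have "openin (bd_space r R) (cyl r R (Mrec \<xi> t))" using open_cyl INV1[OF xt(1,3)] by blast
      moreover have "f \<in> cyl r R (Mrec \<xi> t)" using Fm_image[OF xt(1,3)] g(2) tn(2) xt(2) by blast
      moreover have "cyl r R (Mrec \<xi> t) \<subseteq> Fm ` U" using Fm_image[OF xt(1,3)] tn(3) xt(2) by blast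
      ultimately show "\<exists>T. openin (bd_space r R) T \<and> f \<in> T \<and> T \<subseteq> Fm ` U" by blast
    qed
  qed
  have surj: "Fm ` topspace (bd_space kappa W) = topspace (bd_space r R)"
    unfolding tsT tsX using Fm_carrier Fm_surj by blast
  have inj: "inj_on Fm (topspace (bd_space kappa W))" unfolding tsT by (rule Fm_inj)
  have "homeomorphic_map (bd_space kappa W) (bd_space r R) Fm"
    using bijective_open_imp_homeomorphic_map[OF cont opn surj inj] .
  thus ?thesis by (rule homeomorphic_map_imp_homeomorphic_space)
qed

end

lemma homeo_of_nodes:
  assumes X: "bdsp2 r R kappa" and Y: "bdsp2 r' R' kappa" and eq: "|nodes r R| =o |nodes r' R'|"
  shows "bd_space r R homeomorphic_space bd_space r' R'"
proof -
  have X3: "bdsp3 r R kappa (nodes r' R')"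
    using X eq ordIso_symmetric unfolding bdsp3_def bdsp3_axioms_def by blast
  have Y3: "bdsp3 r' R' kappa (nodes r' R')"
    using Y ordIso_reflexive card_of_Well_order unfolding bdsp3_def bdsp3_axioms_def by blast
  have 1: "bd_space kappa (nodes r' R') homeomorphic_space bd_space r R" using bdsp3.homeo[OF X3] .
  have 2: "bd_space kappa (nodes r' R') homeomorphic_space bd_space r' R'" using bdsp3.homeo[OF Y3] .
  show ?thesis using homeomorphic_space_trans[OF iffD1[OF homeomorphic_space_sym 1] 2] .
qed

lemma homeo_iff_pair:
  assumes X: "bdsp2 r R kappa" and Y: "bdsp2 r' R' kappa"
  shows "homeo_iff_same_weight (bd_space r R) (bd_space r' R')"
proof -
  have Xb: "bdsp r R" using X unfolding bdsp2_def by blast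
  have Yb: "bdsp r' R'" using Y unfolding bdsp2_def by blast
  show ?thesis unfolding homeo_iff_same_weight_def
  proof
    assume "bd_space r R homeomorphic_space bd_space r' R'"
    thus "same_weight (bd_space r R) (bd_space r' R')" by (rule homeo_same_weight)
  next
    assume "same_weight (bd_space r R) (bd_space r' R')"
    hence "|nodes r R| =o |nodes r' R'|" using same_weight_iff[OF Xb Yb] by simp
    thus "bd_space r R homeomorphic_space bd_space r' R'" by (rule homeo_of_nodes[OF X Y])
  qed
qed

lemma two_inf: assumes "infinite A" shows "\<exists>a b. a \<in> A \<and> b \<in> A \<and> a \<noteq> b"
proof -
  have "A \<noteq> {}" using assms by auto
  then obtain a where a: "a \<in> A" by blast
  have "A - {a} \<noteq> {}"
  proof
    assume "A - {a} = {}"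
    hence "A \<subseteq> {a}" by blast
    hence "finite A" using finite_subset by blast
    thus False using assms by simp
  qed
  then obtain b where "b \<in> A - {a}" by blast
  thus ?thesis using a by blast
qed

lemma cf_eq_self: assumes CO: "Card_order kappa" and INF: "infinite (Field kappa)" and REG: "regularCard kappa"
  shows "cf_eq kappa kappa"
proof -
  have c: "cofinal (Field kappa) kappa"
    unfolding cofinal_def using infinite_Card_order_limit[OF CO INF] by blast
  have i: "|Field kappa| =o kappa" by (rule card_of_Field_ordIso[OF CO])
  have A: "\<exists>K\<subseteq>Field kappa. cofinal K kappa \<and> |K| =o kappa" using c i by blast
  have B: "\<forall>K\<subseteq>Field kappa. cofinal K kappa \<longrightarrow> kappa \<le>o |K|"
  proof (intro allI impI)
    fix K assume K1: "K \<subseteq> Field kappa" and K2: "cofinal K kappa"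
    have "|K| =o kappa" using REG K1 K2 unfolding regularCard_def by blast
    hence "kappa =o |K|" by (rule ordIso_symmetric)
    thus "kappa \<le>o |K|" by (simp add: ordIso_iff_ordLeq)
  qed
  show ?thesis unfolding cf_eq_def using A B by blast
qed

lemma kappa_le_mu: assumes COk: "Card_order kappa" and CF: "cf_eq mu kappa"
  shows "|Field kappa| \<le>o |Field mu|"
proof -
  obtain K where K: "K \<subseteq> Field mu" "|K| =o kappa" using CF unfolding cf_eq_def by blast
  have "|Field kappa| =o kappa" by (rule card_of_Field_ordIso[OF COk])
  hence "|Field kappa| =o |K|" by (rule ordIso_transitive[OF _ ordIso_symmetric[OF K(2)]])
  hence "|Field kappa| \<le>o |K|" by (simp add: ordIso_iff_ordLeq)
  thus ?thesis by (rule ordLeq_transitive[OF _ card_of_mono1[OF K(1)]])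
qed

lemma kappa_lt_mu: assumes COk: "Card_order kappa" and COm: "Card_order mu"
  and CF: "cf_eq mu kappa" and NR: "\<not> regularCard mu"
  shows "|Field kappa| <o |Field mu|"
proof (rule ccontr)
  assume "\<not> |Field kappa| <o |Field mu|"
  hence le: "|Field mu| \<le>o |Field kappa|" by (metis not_ordLess_iff_ordLeq card_of_Well_order)
  have "regularCard mu"
    unfolding regularCard_def
  proof (intro allI impI)
    fix K assume K: "K \<subseteq> Field mu \<and> cofinal K mu"
    have 1: "kappa \<le>o |K|" using CF K unfolding cf_eq_def by blast
    have 2: "|K| \<le>o |Field mu|" using card_of_mono1 K by blast
    have 3: "|Field mu| =o mu" by (rule card_of_Field_ordIso[OF COm])
    have 4: "|Field kappa| =o kappa" by (rule card_of_Field_ordIso[OF COk])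
    have "|K| \<le>o mu" using ordLeq_ordIso_trans[OF 2 3] .
    moreover have "mu \<le>o |K|"
    proof -
      have "mu \<le>o |Field mu|" using 3 by (simp add: ordIso_iff_ordLeq)
      moreover have "|Field kappa| \<le>o kappa" using 4 by (simp add: ordIso_iff_ordLeq)
      ultimately have "mu \<le>o kappa" by (rule ordLeq_transitive[OF ordLeq_transitive[OF _ le]])
      thus ?thesis by (rule ordLeq_transitive[OF _ 1])
    qed
    ultimately show "|K| =o mu" by (simp add: ordIso_iff_ordLeq)
  qed
  thus False using NR by simp
qed

theorem mainTheorem3:
  fixes kappa :: "'k rel" and mu :: "'m rel"
  assumes "Card_order kappa" and "infinite (Field kappa)" and "regularCard kappa"
    and "Card_order mu" and "infinite (Field mu)" and "\<not> regularCard mu"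
    and "cf_eq mu kappa"
  shows "let X1 = bd_space kappa (Field mu);
             X2 = bd_space mu (UNIV :: bool set);
             X3 = bd_space mu (Field kappa);
             X4 = bd_space mu (Field mu)
         in homeo_iff_same_weight X1 X1 \<and> homeo_iff_same_weight X1 X2 \<and>
            homeo_iff_same_weight X1 X3 \<and> homeo_iff_same_weight X1 X4 \<and>
            homeo_iff_same_weight X2 X1 \<and> homeo_iff_same_weight X2 X2 \<and>
            homeo_iff_same_weight X2 X3 \<and> homeo_iff_same_weight X2 X4 \<and>
            homeo_iff_same_weight X3 X1 \<and> homeo_iff_same_weight X3 X2 \<and>
            homeo_iff_same_weight X3 X3 \<and> homeo_iff_same_weight X3 X4 \<and>
            homeo_iff_same_weight X4 X1 \<and> homeo_iff_same_weight X4 X2 \<and>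
            homeo_iff_same_weight X4 X3 \<and> homeo_iff_same_weight X4 X4"
proof -
  note COk = assms(1) and INFk = assms(2) and REGk = assms(3) and COm = assms(4)
    and INFm = assms(5) and NR = assms(6) and CF = assms(7)
  have kle: "|Field kappa| \<le>o |Field mu|" by (rule kappa_le_mu[OF COk CF])
  have klt: "|Field kappa| <o |Field mu|" by (rule kappa_lt_mu[OF COk COm CF NR])
  have cfk: "cf_eq kappa kappa" by (rule cf_eq_self[OF COk INFk REGk])
  have twom: "\<exists>r0 r1. r0 \<in> Field mu \<and> r1 \<in> Field mu \<and> r0 \<noteq> r1" using two_inf[OF INFm] .
  have twok: "\<exists>r0 r1. r0 \<in> Field kappa \<and> r1 \<in> Field kappa \<and> r0 \<noteq> r1" using two_inf[OF INFk] .
  have twob: "\<exists>r0 r1. r0 \<in> (UNIV :: bool set) \<and> r1 \<in> UNIV \<and> r0 \<noteq> r1" by blast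
  have kk: "|Field kappa| \<le>o |Field kappa|" by (rule ordLeq_reflexive[OF card_of_Well_order])
  have b1: "bdsp2 kappa (Field mu) kappa"
    by (rule bdsp2.intro[OF bdsp.intro[OF COk INFk twom] bdsp2_axioms.intro[OF COk INFk cfk]])
      (use kle INFm in blast)
  have bm2: "bdsp mu (UNIV :: bool set)" by (rule bdsp.intro[OF COm INFm twob])
  have b2: "bdsp2 mu (UNIV :: bool set) kappa"
  proof (rule bdsp2.intro[OF bm2 bdsp2_axioms.intro[OF COk INFk CF]])
    obtain a where a: "a \<in> Field mu" "|Field kappa| =o |underS mu a|"
      using bdsp.small_is_underS[OF bm2 klt] by blast
    hence "|Field kappa| \<le>o |underS mu a|" by (simp add: ordIso_iff_ordLeq)
    thus "( |Field kappa| \<le>o |UNIV :: bool set| \<and> infinite (UNIV :: bool set)) \<or> (\<exists>x\<in>Field mu. |Field kappa| \<le>o |underS mu x| )"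
      using a(1) by blast
  qed
  have b3: "bdsp2 mu (Field kappa) kappa"
    by (rule bdsp2.intro[OF bdsp.intro[OF COm INFm twok] bdsp2_axioms.intro[OF COk INFk CF]])
      (use kk INFk in blast)
  have b4: "bdsp2 mu (Field mu) kappa"
    by (rule bdsp2.intro[OF bdsp.intro[OF COm INFm twom] bdsp2_axioms.intro[OF COk INFk CF]])
      (use kle INFm in blast)
  show ?thesis unfolding Let_def
    using homeo_iff_pair[OF b1 b1] homeo_iff_pair[OF b1 b2] homeo_iff_pair[OF b1 b3] homeo_iff_pair[OF b1 b4]
      homeo_iff_pair[OF b2 b1] homeo_iff_pair[OF b2 b2] homeo_iff_pair[OF b2 b3] homeo_iff_pair[OF b2 b4]
      homeo_iff_pair[OF b3 b1] homeo_iff_pair[OF b3 b2] homeo_iff_pair[OF b3 b3] homeo_iff_pair[OF b3 b4]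
      homeo_iff_pair[OF b4 b1] homeo_iff_pair[OF b4 b2] homeo_iff_pair[OF b4 b3] homeo_iff_pair[OF b4 b4]
    by simp
qed

end
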